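(* Let $k$ be a field and suppose $Y,Z$ are objects of $\mathcal S_2(k)$ of the same partition type $(\alpha,\beta,\gamma)$. (1) $\delta H(Y,Z)_X=0$ for $X=P_1^1$ and for $X=P_0^m$, $X=P_2^m$ for every $m\in\mathbb N$. (2) For every $r\ge1$, $\lim_{m\to\infty}\delta H(Y,Z)_{B_2^{m,r}}=\delta H(Y,Z)_{P_1^r}$.
   Context: For a partition $\alpha$ let $N_\alpha=\bigoplus_ik[T]/(T^{\alpha_i})$. $\mathcal S(k)$: objects are triples $(N_\alpha,N_\beta,f)$ with $f$ an injective $k[T]$-map; morphisms are pairs $(\psi_1,\psi_2)$ of $k[T]$-maps with $f'\psi_1=\psi_2f$. $\mathcal S_2(k)$: objects with $\alpha_1\le2$. Partition type $(\alpha,\beta,\gamma)$: $\operatorname{Coker}f\cong N_\gamma$. Pickets: $P_\ell^m=(N_{(\ell)},N_{(m)},\iota)$ for $0\le\ell\le\min\{2,m\}$, $\iota$ the inclusion of the unique $\ell$-dimensional $T$-invariant subspace. Bipickets: $B_2^{m,r}=(N_{(2)},N_{(m,r)},\delta)$ for $1\le r\le m-2$, with $\delta(1)=(T^{m-2},T^{r-1})$. For objects $X,Y,Z$ put $[X,Y]=\dim_k\operatorname{Hom}_{\mathcal S}(X,Y)$ and $\delta H(Y,Z)_X=[X,Z]-[X,Y]$. *)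

theory Defs
  imports Complex_Main "HOL-Library.Function_Algebras" "HOL-Library.Product_Plus"
begin

text \<open>N_alpha = direct sum of k[T]/(T^alpha_i) has k-basis e_(i,j) = T^j * (generator of i-th summand),
  i < length alpha, j < alpha!i.  Vectors are coordinate functions (nat*nat => 'k) vanishing
  outside this index set; k-linear maps are matrices M p q (coefficient at e_p of the image of e_q).\<close>

definition is_partition :: "nat list \<Rightarrow> bool" where
  "is_partition a \<longleftrightarrow> sorted_wrt (\<ge>) a \<and> 0 \<notin> set a"

definition idx :: "nat list \<Rightarrow> (nat \<times> nat) set" where
  "idx a = {(i, j). i < length a \<and> j < a ! i}"

definition vecs :: "nat list \<Rightarrow> (nat \<times> nat \<Rightarrow> 'k::field) set" where
  "vecs a = {v. \<forall>p. p \<notin> idx a \<longrightarrow> v p = 0}"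

text \<open>action of T on coordinates: T e_(i,j) = e_(i,j+1) (= 0 if j+1 = alpha_i)\<close>
definition shiftT :: "nat list \<Rightarrow> (nat \<times> nat \<Rightarrow> 'k::field) \<Rightarrow> (nat \<times> nat \<Rightarrow> 'k)" where
  "shiftT a v = (\<lambda>(i, j). if (i, j) \<in> idx a \<and> 0 < j then v (i, j - 1) else 0)"

type_synonym 'k mat = "nat \<times> nat \<Rightarrow> nat \<times> nat \<Rightarrow> 'k"

definition mat_apply :: "nat list \<Rightarrow> 'k::field mat \<Rightarrow> (nat \<times> nat \<Rightarrow> 'k) \<Rightarrow> (nat \<times> nat \<Rightarrow> 'k)" where
  "mat_apply a M v = (\<lambda>p. \<Sum>q\<in>idx a. M p q * v q)"

definition homT :: "nat list \<Rightarrow> nat list \<Rightarrow> 'k::field mat \<Rightarrow> bool" where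
  "homT a b M \<longleftrightarrow> (\<forall>p q. (p \<notin> idx b \<or> q \<notin> idx a) \<longrightarrow> M p q = 0)
     \<and> (\<forall>v \<in> vecs a. mat_apply a M (shiftT a v) = shiftT b (mat_apply a M v))"

text \<open>objects (N_alpha, N_beta, f) of S(k)\<close>
type_synonym 'k obj = "nat list \<times> nat list \<times> 'k mat"

definition is_obj :: "'k::field obj \<Rightarrow> bool" where
  "is_obj X = (case X of (a, b, f) \<Rightarrow> is_partition a \<and> is_partition b \<and> homT a b f
      \<and> inj_on (mat_apply a f) (vecs a))"

definition is_obj2 :: "'k::field obj \<Rightarrow> bool" where
  "is_obj2 X \<longleftrightarrow> is_obj X \<and> (\<forall>x \<in> set (fst X). x \<le> 2)"

text \<open>partition type (alpha, beta, gamma): Coker f is isomorphic to N_gamma,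
  i.e. there is a surjective k[T]-map N_beta -> N_gamma with kernel Im f\<close>
definition has_type :: "'k::field obj \<Rightarrow> nat list \<Rightarrow> nat list \<Rightarrow> nat list \<Rightarrow> bool" where
  "has_type X a b c \<longleftrightarrow> is_partition c \<and> fst X = a \<and> fst (snd X) = b \<and>
     (\<exists>g. homT b c g \<and> mat_apply b g ` vecs b = vecs c \<and>
          {v \<in> vecs b. mat_apply b g v = (\<lambda>_. 0)} = mat_apply a (snd (snd X)) ` vecs a)"

definition Hom :: "'k::field obj \<Rightarrow> 'k obj \<Rightarrow> ('k mat \<times> 'k mat) set" where
  "Hom X Y = (case X of (a, b, f) \<Rightarrow> case Y of (a', b', f') \<Rightarrow>
     {(p1, p2). homT a a' p1 \<and> homT b b' p2 \<and>
        (\<forall>v \<in> vecs a. mat_apply a' f' (mat_apply a p1 v) = mat_apply b p2 (mat_apply a f v))})"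

definition scaleM :: "'k::field \<Rightarrow> 'k mat \<times> 'k mat \<Rightarrow> 'k mat \<times> 'k mat" where
  "scaleM c P = ((\<lambda>p q. c * fst P p q), (\<lambda>p q. c * snd P p q))"

text \<open>[X,Y] = dim_k Hom(X,Y)\<close>
definition homdim :: "'k::field obj \<Rightarrow> 'k obj \<Rightarrow> nat" where
  "homdim X Y = vector_space.dim scaleM (Hom X Y)"

definition deltaH :: "'k::field obj \<Rightarrow> 'k obj \<Rightarrow> 'k obj \<Rightarrow> int" where
  "deltaH Y Z X = int (homdim X Z) - int (homdim X Y)"

text \<open>N_(n) for a one-part partition (n) (N_(0) = 0)\<close>
definition plist :: "nat \<Rightarrow> nat list" where
  "plist n = (if n = 0 then [] else [n])"

definition basisv :: "nat \<times> nat \<Rightarrow> (nat \<times> nat \<Rightarrow> 'k::field)" where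
  "basisv p = (\<lambda>q. if q = p then 1 else 0)"

text \<open>the k[T]-map N_(l) -> N_b sending the generator 1 to w\<close>
definition cyc_map :: "nat \<Rightarrow> nat list \<Rightarrow> (nat \<times> nat \<Rightarrow> 'k::field) \<Rightarrow> 'k mat" where
  "cyc_map l b w = (\<lambda>p q. if q \<in> idx (plist l) then (shiftT b ^^ snd q) w p else 0)"

text \<open>picket P_l^m: inclusion 1 |-> T^(m-l)\<close>
definition picket :: "nat \<Rightarrow> nat \<Rightarrow> 'k::field obj" where
  "picket l m = (plist l, plist m, cyc_map l (plist m) (basisv (0, m - l)))"

text \<open>bipicket B_2^(m,r): 1 |-> (T^(m-2), T^(r-1))\<close>
definition bipicket :: "nat \<Rightarrow> nat \<Rightarrow> 'k::field obj" where
  "bipicket m r = ([2], [m, r], cyc_map 2 [m, r] (basisv (0, m - 2) + basisv (1, r - 1)))"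

end

theory Submission
  imports Defs
begin

context vector_space_pair begin
lemma dim_image_eq_gen:
  assumes lf: "Vector_Spaces.linear s1 s2 f"
    and fi: "inj_on f (vs1.span S)"
  shows "vs2.dim (f ` S) = vs1.dim S"
proof -
  interpret lf: Vector_Spaces.linear s1 s2 f by fact
  obtain B where B: "B \<subseteq> S" "vs1.independent B" "S \<subseteq> vs1.span B" "card B = vs1.dim S"
    using vs1.basis_exists[of S] by auto
  then have "vs1.span S = vs1.span B"
    using vs1.span_mono[of B S] vs1.span_mono[of S "vs1.span B"] vs1.span_span[of B] by auto
  moreover have "card (f ` B) = card B"
    using assms card_image[of f B] inj_on_subset[of f "vs1.span S" B] B vs1.span_superset by auto
  moreover have "(f ` B) \<subseteq> (f ` S)"
    using B by auto
  ultimately show ?thesis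
    by (metis B(2) B(4) fi lf.dependent_inj_imageD lf.span_image vs2.dim_eq_card_independent vs2.dim_span)
qed
end

context vector_space begin


lemma dim_direct_sum:
  assumes S: "subspace S" and T: "subspace T" and ST: "S \<inter> T \<subseteq> {0}"
    and fS: "\<exists>F. finite F \<and> S \<subseteq> span F" and fT: "\<exists>F. finite F \<and> T \<subseteq> span F"
  shows "dim {x + y |x y. x \<in> S \<and> y \<in> T} = dim S + dim T"
proof -
  obtain B where B: "B \<subseteq> S" "independent B" "S \<subseteq> span B" "card B = dim S"
    using basis_exists[of S] by blast
  obtain C where C: "C \<subseteq> T" "independent C" "T \<subseteq> span C" "card C = dim T"
    using basis_exists[of T] by blast
  from fS obtain F where F: "finite F" "S \<subseteq> span F" by blast
  from fT obtain G where G: "finite G" "T \<subseteq> span G" by blast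
  have fB: "finite B" using independent_span_bound[OF F(1) B(2)] B(1) F(2) by blast
  have fC: "finite C" using independent_span_bound[OF G(1) C(2)] C(1) G(2) by blast
  have spB: "span B = S" using B S by (metis span_subspace)
  have spC: "span C = T" using C T by (metis span_subspace)
  have disj: "B \<inter> C = {}"
  proof -
    have "B \<inter> C \<subseteq> {0}" using B(1) C(1) ST by blast
    moreover have "0 \<notin> B" using B(2) dependent_zero by blast
    ultimately show ?thesis by blast
  qed
  have ind: "independent (B \<union> C)"
  proof (rule ccontr)
    assume "\<not> independent (B \<union> C)"
    then obtain u v where uv: "v \<in> B \<union> C" "u v \<noteq> 0" "(\<Sum>v\<in>B \<union> C. u v *s v) = 0"
      using dependent_finite[of "B \<union> C"] fB fC by blast
    have split: "(\<Sum>v\<in>B \<union> C. u v *s v) = (\<Sum>v\<in>B. u v *s v) + (\<Sum>v\<in>C. u v *s v)"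
      using fB fC disj by (simp add: sum.union_disjoint)
    have s1: "(\<Sum>v\<in>B. u v *s v) \<in> S"
      using B(1) S by (intro subspace_sum) (auto intro: subspace_scale)
    have s2: "(\<Sum>v\<in>C. u v *s v) \<in> T"
      using C(1) T by (intro subspace_sum) (auto intro: subspace_scale)
    have e: "(\<Sum>v\<in>B. u v *s v) = - (\<Sum>v\<in>C. u v *s v)"
      using uv(3) split by (simp add: eq_neg_iff_add_eq_0)
    have "- (\<Sum>v\<in>C. u v *s v) \<in> T" using s2 T subspace_neg by blast
    then have z1: "(\<Sum>v\<in>B. u v *s v) = 0" using s1 e ST by auto
    then have z2: "(\<Sum>v\<in>C. u v *s v) = 0" using e by simp
    show False
    proof (cases "v \<in> B")
      case True
      then show ?thesis using dependent_finite[of B] fB B(2) z1 uv(2) by blast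
    next
      case False
      then have "v \<in> C" using uv(1) by blast
      then show ?thesis using dependent_finite[of C] fC C(2) z2 uv(2) by blast
    qed
  qed
  have sp: "span (B \<union> C) = span {x + y |x y. x \<in> S \<and> y \<in> T}"
  proof -
    have "span (B \<union> C) = {x + y |x y. x \<in> span B \<and> y \<in> span C}" by (rule span_Un)
    also have "\<dots> = {x + y |x y. x \<in> S \<and> y \<in> T}" using spB spC by simp
    also have "\<dots> = span {x + y |x y. x \<in> S \<and> y \<in> T}"
      proof -
      have "span {x + y |x y. x \<in> S \<and> y \<in> T} = {x + y |x y. x \<in> S \<and> y \<in> T}"
        using subspace_sums[OF S T] by (rule span_eq_iff[THEN iffD2])
      then show ?thesis by (rule sym)
    qed
    finally show ?thesis .
  qed
  have "dim {x + y |x y. x \<in> S \<and> y \<in> T} = card (B \<union> C)"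
    using dim_eq_card[OF sp ind] .
  also have "\<dots> = card B + card C" using card_Un_disjoint[OF fB fC disj] .
  finally show ?thesis using B(4) C(4) by simp
qed

lemma rank_nullity_gen:
  assumes lf: "Vector_Spaces.linear scale scale h" and S: "subspace S" and fS: "\<exists>F. finite F \<and> S \<subseteq> span F"
  shows "dim S = dim {x\<in>S. h x = 0} + dim (h ` S)"
proof -
  interpret p: vector_space_pair scale scale by unfold_locales
  obtain g where g: "g ` UNIV \<subseteq> S" "Vector_Spaces.linear scale scale g" "\<forall>v\<in>h ` S. h (g v) = v"
    using p.linear_exists_right_inverse_on[OF lf S] by blast
  have hS: "subspace (h ` S)" using p.linear_subspace_image[OF lf S] .
  have G: "subspace (g ` (h ` S))" using p.linear_subspace_image[OF g(2) hS] .
  have K: "subspace {x\<in>S. h x = 0}"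
  proof -
    have "{x\<in>S. h x = 0} = S \<inter> {x. h x = 0}" by blast
    then show ?thesis using subspace_inter[OF S p.linear_subspace_kernel[OF lf]] by simp
  qed
  have GK: "g ` (h ` S) \<inter> {x\<in>S. h x = 0} \<subseteq> {0}"
  proof
    fix z assume "z \<in> g ` (h ` S) \<inter> {x\<in>S. h x = 0}"
    then obtain w where w: "w \<in> h ` S" "z = g w" "h z = 0" by blast
    then have "w = 0" using g(3) by auto
    then show "z \<in> {0}" using w p.linear_0[OF g(2)] by simp
  qed
  have eq: "{x + y |x y. x \<in> g ` (h ` S) \<and> y \<in> {x\<in>S. h x = 0}} = S"
  proof (intro set_eqI iffI)
    fix z assume "z \<in> {x + y |x y. x \<in> g ` (h ` S) \<and> y \<in> {x\<in>S. h x = 0}}"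
    then obtain x y where "z = x + y" "x \<in> g ` (h ` S)" "y \<in> S" by blast
    then show "z \<in> S" using g(1) S subspace_add by blast
  next
    fix z assume z: "z \<in> S"
    have "h (z - g (h z)) = 0" using g(3) z p.linear_diff[OF lf] by auto
    moreover have "z - g (h z) \<in> S" using z g(1) S subspace_diff by blast
    ultimately show "z \<in> {x + y |x y. x \<in> g ` (h ` S) \<and> y \<in> {x\<in>S. h x = 0}}"
    proof -
      have "z = g (h z) + (z - g (h z))" by simp
      moreover have "g (h z) \<in> g ` (h ` S)" using z by blast
      moreover have "z - g (h z) \<in> {x\<in>S. h x = 0}" using \<open>h (z - g (h z)) = 0\<close> \<open>z - g (h z) \<in> S\<close> by simp
      ultimately show ?thesis by (intro CollectI exI[of _ "g (h z)"] exI[of _ "z - g (h z)"]) simp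
    qed
  qed
  have fG: "\<exists>F. finite F \<and> g ` (h ` S) \<subseteq> span F" using fS g(1) by blast
  have fK: "\<exists>F. finite F \<and> {x\<in>S. h x = 0} \<subseteq> span F" using fS by blast
  have "dim S = dim (g ` (h ` S)) + dim {x\<in>S. h x = 0}"
    using dim_direct_sum[OF G K GK fG fK] eq by simp
  moreover have "dim (g ` (h ` S)) = dim (h ` S)"
  proof (rule p.dim_image_eq_gen[OF g(2)])
    show "inj_on g (span (h ` S))"
    proof (rule inj_onI)
      fix u v assume "u \<in> span (h ` S)" "v \<in> span (h ` S)" "g u = g v"
      then have "u \<in> h ` S" "v \<in> h ` S" using span_eq_iff[THEN iffD2, OF hS] by simp_all
      then show "u = v" using g(3) \<open>g u = g v\<close> by metis
    qed
  qed
  ultimately show ?thesis by simp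
qed

end

definition svec :: "'k::field \<Rightarrow> (nat \<times> nat \<Rightarrow> 'k) \<Rightarrow> (nat \<times> nat \<Rightarrow> 'k)" where
  "svec c v = (\<lambda>x. c * v x)"

lemma vs_svec: "vector_space (svec :: 'k::field \<Rightarrow> _)"
  by unfold_locales (auto simp: svec_def fun_eq_iff algebra_simps)

lemma vs_scaleM: "vector_space (scaleM :: 'k::field \<Rightarrow> _)"
  by unfold_locales (auto simp: scaleM_def fun_eq_iff algebra_simps)

lemma sum_app: "(\<Sum>a\<in>A. F a) x = (\<Sum>a\<in>A. F a x)"
  by (induct A rule: infinite_finite_induct) auto

lemma finite_idx: "finite (idx a)"
proof -
  have "idx a \<subseteq> {..<length a} \<times> {..<sum_list a}"
    by (auto simp: idx_def elem_le_sum_list intro: less_le_trans)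
  then show ?thesis by (rule finite_subset) auto
qed

lemma idx_down: "(i, j) \<in> idx a \<Longrightarrow> j' \<le> j \<Longrightarrow> (i, j') \<in> idx a"
  by (auto simp: idx_def)

lemma sum_delta_mult: "finite A \<Longrightarrow> (\<Sum>s\<in>A. g s * (if s = t then 1 else 0)) = (if t \<in> A then g t else (0::'k::field))"
proof -
  assume "finite A"
  have "(\<Sum>s\<in>A. g s * (if s = t then 1 else 0)) = (\<Sum>s\<in>A. if s = t then g s else 0)"
    by (rule sum.cong) auto
  then show ?thesis using \<open>finite A\<close> by (simp add: sum.delta')
qed

lemma mat_apply_basis: "q \<in> idx a \<Longrightarrow> mat_apply a M (basisv q) = (\<lambda>p. M p q)"
  unfolding mat_apply_def basisv_def
  by (rule ext) (simp add: sum_delta_mult[OF finite_idx])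

lemma basisv_vecs: "q \<in> idx a \<Longrightarrow> basisv q \<in> vecs a"
  by (auto simp: vecs_def basisv_def)

lemma mat_ext: "(\<forall>v\<in>vecs a. mat_apply a A v = mat_apply a B v) \<longleftrightarrow> (\<forall>p. \<forall>q\<in>idx a. A p q = B p q)"
proof
  assume h: "\<forall>v\<in>vecs a. mat_apply a A v = mat_apply a B v"
  show "\<forall>p. \<forall>q\<in>idx a. A p q = B p q"
  proof (intro allI ballI)
    fix p q assume q: "q \<in> idx a"
    have "mat_apply a A (basisv q) = mat_apply a B (basisv q)" using h basisv_vecs[OF q] by blast
    then show "A p q = B p q" using mat_apply_basis[OF q] by metis
  qed
next
  assume "\<forall>p. \<forall>q\<in>idx a. A p q = B p q"
  then show "\<forall>v\<in>vecs a. mat_apply a A v = mat_apply a B v"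
    by (auto simp: mat_apply_def fun_eq_iff intro!: sum.cong)
qed

lemma mat_comp: "mat_apply b A (mat_apply a B v) = mat_apply a (\<lambda>p q. mat_apply b A (\<lambda>s. B s q) p) v"
  unfolding mat_apply_def
  by (rule ext) (simp add: sum_distrib_left sum_distrib_right mult.assoc sum.swap[of _ "idx b"])

definition Sh :: "nat list \<Rightarrow> 'k::field mat" where
  "Sh a p q = (if p \<in> idx a \<and> 0 < snd p \<and> q = (fst p, snd p - 1) then 1 else 0)"

lemma shiftT_mat: "shiftT a v = mat_apply a (Sh a) v"
proof (rule ext)
  fix p :: "nat \<times> nat"
  obtain i j where p: "p = (i, j)" by (cases p)
  show "shiftT a v p = mat_apply a (Sh a) v p"
  proof (cases "(i, j) \<in> idx a \<and> 0 < j")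
    case True
    then have "(i, j - 1) \<in> idx a" using idx_down by fastforce
    have "mat_apply a (Sh a) v p = (\<Sum>q\<in>idx a. v q * (if q = (i, j - 1) then 1 else 0))"
      unfolding mat_apply_def Sh_def p using True by (intro sum.cong) auto
    also have "\<dots> = v (i, j - 1)" using \<open>(i, j - 1) \<in> idx a\<close> by (simp add: sum_delta_mult[OF finite_idx])
    finally show ?thesis using True by (simp add: shiftT_def p)
  next
    case False
    then show ?thesis unfolding mat_apply_def Sh_def shiftT_def p by auto
  qed
qed

lemma Sh_col: "(\<lambda>s. Sh a s (i, j)) = (if (i, Suc j) \<in> idx a then basisv (i, Suc j) else (\<lambda>_. 0))"
  by (auto simp: Sh_def basisv_def fun_eq_iff)

lemma homT_cols: "homT a b M \<longleftrightarrow> (\<forall>p q. (p \<notin> idx b \<or> q \<notin> idx a) \<longrightarrow> M p q = 0) \<and>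
    (\<forall>i j. (i, j) \<in> idx a \<longrightarrow> shiftT b (\<lambda>p. M p (i, j)) = (if (i, Suc j) \<in> idx a then (\<lambda>p. M p (i, Suc j)) else (\<lambda>_. 0)))"
proof -
  have "(\<forall>v \<in> vecs a. mat_apply a M (shiftT a v) = shiftT b (mat_apply a M v)) \<longleftrightarrow>
     (\<forall>v \<in> vecs a. mat_apply a (\<lambda>p q. mat_apply a M (\<lambda>s. Sh a s q) p) v = mat_apply a (\<lambda>p q. mat_apply b (Sh b) (\<lambda>s. M s q) p) v)"
    by (simp add: shiftT_mat mat_comp)
  also have "\<dots> \<longleftrightarrow> (\<forall>p. \<forall>q\<in>idx a. mat_apply a M (\<lambda>s. Sh a s q) p = mat_apply b (Sh b) (\<lambda>s. M s q) p)"
    by (rule mat_ext)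
  also have "\<dots> \<longleftrightarrow> (\<forall>i j. (i, j) \<in> idx a \<longrightarrow> shiftT b (\<lambda>p. M p (i, j)) = (if (i, Suc j) \<in> idx a then (\<lambda>p. M p (i, Suc j)) else (\<lambda>_. 0)))"
  proof -
    have e: "mat_apply a M (\<lambda>s. Sh a s (i, j)) = (if (i, Suc j) \<in> idx a then (\<lambda>p. M p (i, Suc j)) else (\<lambda>_. 0))" for i j
      by (simp add: Sh_col mat_apply_basis) (simp add: mat_apply_def)
    have "(\<forall>p. \<forall>q\<in>idx a. mat_apply a M (\<lambda>s. Sh a s q) p = mat_apply b (Sh b) (\<lambda>s. M s q) p)
       \<longleftrightarrow> (\<forall>q\<in>idx a. mat_apply a M (\<lambda>s. Sh a s q) = shiftT b (\<lambda>s. M s q))"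
      by (auto simp: shiftT_mat fun_eq_iff)
    also have "\<dots> \<longleftrightarrow> (\<forall>i j. (i, j) \<in> idx a \<longrightarrow> shiftT b (\<lambda>p. M p (i, j)) = (if (i, Suc j) \<in> idx a then (\<lambda>p. M p (i, Suc j)) else (\<lambda>_. 0)))"
      unfolding Ball_def split_paired_All e by (auto simp del: One_nat_def)
    finally show ?thesis .
  qed
  finally show ?thesis unfolding homT_def by blast
qed

lemma shiftT_app: "shiftT b w (i, j) = (if (i, j) \<in> idx b \<and> 0 < j then w (i, j - 1) else 0)"
  by (simp add: shiftT_def)

lemma funpow_shift: "v \<in> vecs b \<Longrightarrow>
  (shiftT b ^^ n) v = (\<lambda>(i, j). if (i, j) \<in> idx b \<and> n \<le> j then v (i, j - n) else 0)"
proof (induct n)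
  case 0
  then show ?case by (auto simp: vecs_def fun_eq_iff)
next
  case (Suc n)
  show ?case
  proof (rule ext, clarify)
    fix i j
    have "(shiftT b ^^ Suc n) v (i, j) = shiftT b ((shiftT b ^^ n) v) (i, j)" by simp
    also have "\<dots> = (if (i, j) \<in> idx b \<and> 0 < j then (shiftT b ^^ n) v (i, j - 1) else 0)"
      by (rule shiftT_app)
    also have "\<dots> = (if (i, j) \<in> idx b \<and> Suc n \<le> j then v (i, j - Suc n) else 0)"
      unfolding Suc(1)[OF Suc(2)] by (auto dest: idx_down[of _ _ _ "j - 1"])
    finally show "(shiftT b ^^ Suc n) v (i, j) = (if (i, j) \<in> idx b \<and> Suc n \<le> j then v (i, j - Suc n) else 0)" .
  qed
qed

lemma shiftT_vecs: "shiftT b v \<in> vecs b"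
  by (auto simp: vecs_def shiftT_def)

lemma funpow_shift_vecs: "v \<in> vecs b \<Longrightarrow> (shiftT b ^^ n) v \<in> vecs b"
  by (induct n) (auto simp: shiftT_vecs)

lemma shiftT_add: "shiftT b (u + v) = shiftT b u + shiftT b v"
  by (auto simp: shiftT_def fun_eq_iff)
lemma shiftT_svec: "shiftT b (svec c u) = svec c (shiftT b u)"
  by (auto simp: shiftT_def svec_def fun_eq_iff)
lemma shiftT_zero: "shiftT b (\<lambda>_. 0) = (\<lambda>_. 0)"
  by (auto simp: shiftT_def fun_eq_iff)
lemma funpow_add_v: "(shiftT b ^^ n) (u + v) = (shiftT b ^^ n) u + (shiftT b ^^ n) v"
  by (induct n) (simp_all only: funpow.simps comp_apply id_apply shiftT_add)
lemma funpow_svec: "(shiftT b ^^ n) (svec c u) = svec c ((shiftT b ^^ n) u)"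
  by (induct n) (simp_all only: funpow.simps comp_apply id_apply shiftT_svec)
lemma funpow_zero: "(shiftT b ^^ n) (\<lambda>_. 0) = (\<lambda>_. 0)"
  by (induct n) (simp_all only: funpow.simps comp_apply id_apply shiftT_zero)

lemma mat_apply_add: "mat_apply a M (u + v) = mat_apply a M u + mat_apply a M v"
  by (auto simp: mat_apply_def fun_eq_iff algebra_simps sum.distrib)
lemma mat_apply_svec: "mat_apply a M (svec c u) = svec c (mat_apply a M u)"
  by (auto simp: mat_apply_def svec_def fun_eq_iff algebra_simps sum_distrib_left)
lemma mat_apply_zero: "mat_apply a M (\<lambda>_. 0) = (\<lambda>_. 0)"
  by (auto simp: mat_apply_def fun_eq_iff)
lemma mat_apply_addM: "mat_apply a (M + N) u = mat_apply a M u + mat_apply a N u"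
  by (auto simp: mat_apply_def fun_eq_iff algebra_simps sum.distrib)
lemma mat_apply_scaleM: "mat_apply a (\<lambda>p q. c * M p q) u = svec c (mat_apply a M u)"
  by (auto simp: mat_apply_def svec_def fun_eq_iff algebra_simps sum_distrib_left)
lemma mat_apply_zeroM: "mat_apply a 0 u = (\<lambda>_. 0)"
  by (auto simp: mat_apply_def fun_eq_iff)

definition gen_map :: "nat list \<Rightarrow> nat list \<Rightarrow> (nat \<Rightarrow> nat \<times> nat \<Rightarrow> 'k::field) \<Rightarrow> 'k mat" where
  "gen_map a b ws = (\<lambda>p q. if q \<in> idx a then (shiftT b ^^ snd q) (ws (fst q)) p else 0)"

lemma gen_map_cong: "(\<And>i. i < length a \<Longrightarrow> ws i = ws' i) \<Longrightarrow> gen_map a b ws = gen_map a b ws'"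
proof -
  assume h: "\<And>i. i < length a \<Longrightarrow> ws i = ws' i"
  show ?thesis unfolding gen_map_def by (intro ext) (auto simp: idx_def h)
qed

lemma cyc_map_gen: "cyc_map l b w = gen_map (plist l) b (\<lambda>_. w)"
  by (simp add: cyc_map_def gen_map_def)

lemma gen_map_col: "(i, j) \<in> idx a \<Longrightarrow> (\<lambda>p. gen_map a b ws p (i, j)) = (shiftT b ^^ j) (ws i)"
  by (simp add: gen_map_def)

lemma idx0: "i < length a \<Longrightarrow> 0 \<notin> set a \<Longrightarrow> (i, 0) \<in> idx a"
proof -
  assume "i < length a" "0 \<notin> set a"
  then have "a ! i \<noteq> 0" using nth_mem by metis
  then show ?thesis using \<open>i < length a\<close> by (simp add: idx_def)
qed

lemma homT_gen: assumes a0: "0 \<notin> set a"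
  shows "homT a b M \<longleftrightarrow> (\<exists>ws. (\<forall>i<length a. ws i \<in> vecs b \<and> (shiftT b ^^ (a ! i)) (ws i) = (\<lambda>_. 0)) \<and> M = gen_map a b ws)"
proof
  assume h: "homT a b M"
  then have supp: "\<And>p q. p \<notin> idx b \<or> q \<notin> idx a \<Longrightarrow> M p q = 0"
    and cols: "\<And>i j. (i, j) \<in> idx a \<Longrightarrow> shiftT b (\<lambda>p. M p (i, j)) = (if (i, Suc j) \<in> idx a then (\<lambda>p. M p (i, Suc j)) else (\<lambda>_. 0))"
    unfolding homT_cols by blast+
  define ws where "ws i = (\<lambda>p. M p (i, 0))" for i
  have colj: "(i, j) \<in> idx a \<Longrightarrow> (\<lambda>p. M p (i, j)) = (shiftT b ^^ j) (ws i)" for i j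
  proof (induct j)
    case 0
    then show ?case by (simp add: ws_def)
  next
    case (Suc j)
    then have ij: "(i, j) \<in> idx a" using idx_down by fastforce
    have "(\<lambda>p. M p (i, Suc j)) = shiftT b (\<lambda>p. M p (i, j))" using cols[OF ij] Suc(2) by simp
    also have "\<dots> = (shiftT b ^^ Suc j) (ws i)" using Suc(1)[OF ij] by simp
    finally show ?case .
  qed
  show "\<exists>ws. (\<forall>i<length a. ws i \<in> vecs b \<and> (shiftT b ^^ (a ! i)) (ws i) = (\<lambda>_. 0)) \<and> M = gen_map a b ws"
  proof (intro exI conjI allI impI)
    fix i assume i: "i < length a"
    have i0: "(i, 0) \<in> idx a" using idx0[OF i a0] .
    show "ws i \<in> vecs b" using supp by (auto simp: ws_def vecs_def)
    have pos: "0 < a ! i" using i a0 by (metis gr0I nth_mem)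
    have last: "(i, a ! i - 1) \<in> idx a" using i pos by (simp add: idx_def)
    have nl: "(i, Suc (a ! i - 1)) \<notin> idx a" using pos by (simp add: idx_def)
    have "(shiftT b ^^ (a ! i)) (ws i) = shiftT b ((shiftT b ^^ (a ! i - 1)) (ws i))"
      using pos by (metis Suc_pred' comp_apply funpow.simps(2))
    also have "\<dots> = shiftT b (\<lambda>p. M p (i, a ! i - 1))" using colj[OF last] by simp
    also have "\<dots> = (\<lambda>_. 0)" using cols[OF last] nl by simp
    finally show "(shiftT b ^^ (a ! i)) (ws i) = (\<lambda>_. 0)" .
  next
    show "M = gen_map a b ws"
    proof (intro ext)
      fix p q
      show "M p q = gen_map a b ws p q"
      proof (cases "q \<in> idx a")
        case True
        obtain i j where q: "q = (i, j)" by (cases q)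
        have e: "M p (i, j) = (shiftT b ^^ j) (ws i) p"
          using fun_cong[OF colj[OF True[unfolded q]], of p] by simp
        show ?thesis using True e q by (simp add: gen_map_def)
      next
        case False
        then show ?thesis using supp by (simp add: gen_map_def)
      qed
    qed
  qed
next
  assume "\<exists>ws. (\<forall>i<length a. ws i \<in> vecs b \<and> (shiftT b ^^ (a ! i)) (ws i) = (\<lambda>_. 0)) \<and> M = gen_map a b ws"
  then obtain ws where ws: "\<And>i. i < length a \<Longrightarrow> ws i \<in> vecs b"
    "\<And>i. i < length a \<Longrightarrow> (shiftT b ^^ (a ! i)) (ws i) = (\<lambda>_. 0)" and M: "M = gen_map a b ws" by blast
  show "homT a b M" unfolding homT_cols
  proof (intro conjI allI impI)
    fix p q assume "p \<notin> idx b \<or> q \<notin> idx a"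
    then show "M p q = 0"
    proof
      assume "q \<notin> idx a" then show ?thesis by (simp add: M gen_map_def)
    next
      assume pb: "p \<notin> idx b"
      show ?thesis
      proof (cases "q \<in> idx a")
        case True
        then have "fst q < length a" by (auto simp: idx_def)
        then have "(shiftT b ^^ snd q) (ws (fst q)) \<in> vecs b" using ws(1) funpow_shift_vecs by blast
        then have "(shiftT b ^^ snd q) (ws (fst q)) p = 0" using pb unfolding vecs_def by blast
        then show ?thesis by (simp add: M gen_map_def)
      qed (simp add: M gen_map_def)
    qed
  next
    fix i j assume ij: "(i, j) \<in> idx a"
    then have i: "i < length a" by (simp add: idx_def)
    have "shiftT b (\<lambda>p. M p (i, j)) = (shiftT b ^^ Suc j) (ws i)"
      using gen_map_col[OF ij, of b ws] by (simp add: M)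
    moreover have "(i, Suc j) \<in> idx a \<Longrightarrow> (\<lambda>p. M p (i, Suc j)) = (shiftT b ^^ Suc j) (ws i)"
      using gen_map_col[of i "Suc j" a b ws] by (simp add: M)
    moreover have "(i, Suc j) \<notin> idx a \<Longrightarrow> Suc j = a ! i" using ij by (auto simp: idx_def)
    moreover have "(shiftT b ^^ Suc j) (ws i) = shiftT b ((shiftT b ^^ j) (ws i))" by simp
    ultimately show "shiftT b (\<lambda>p. M p (i, j)) = (if (i, Suc j) \<in> idx a then (\<lambda>p. M p (i, Suc j)) else (\<lambda>_. 0))"
      using ws(2)[OF i] by (cases "(i, Suc j) \<in> idx a") metis+
  qed
qed

lemma homT_vecs: "homT a b M \<Longrightarrow> mat_apply a M v \<in> vecs b"
  by (auto simp: homT_def vecs_def mat_apply_def intro!: sum.neutral)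

lemma homT_comm1: "homT a b M \<Longrightarrow> v \<in> vecs a \<Longrightarrow> mat_apply a M (shiftT a v) = shiftT b (mat_apply a M v)"
  by (simp add: homT_def)

lemma homT_comm: "homT a b M \<Longrightarrow> v \<in> vecs a \<Longrightarrow> mat_apply a M ((shiftT a ^^ n) v) = (shiftT b ^^ n) (mat_apply a M v)"
proof (induct n)
  case 0 then show ?case by simp
next
  case (Suc n)
  have "mat_apply a M ((shiftT a ^^ Suc n) v) = mat_apply a M (shiftT a ((shiftT a ^^ n) v))" by simp
  also have "\<dots> = shiftT b (mat_apply a M ((shiftT a ^^ n) v))"
    using homT_comm1[OF Suc(2) funpow_shift_vecs[OF Suc(3)]] .
  also have "\<dots> = (shiftT b ^^ Suc n) (mat_apply a M v)" using Suc by simp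
  finally show ?case .
qed

lemma gen_map_apply_basis: "(i, j) \<in> idx a \<Longrightarrow> mat_apply a (gen_map a b ws) (basisv (i, j)) = (shiftT b ^^ j) (ws i)"
  using mat_apply_basis[of "(i, j)" a "gen_map a b ws"] gen_map_col[of i j a b ws] by simp

lemma hom_cond: assumes l0: "0 \<notin> set l"
  and p1: "homT l a p1" and ph: "homT l m ph" and p2: "homT m b p2" and f: "homT a b f"
  shows "(\<forall>v\<in>vecs l. mat_apply a f (mat_apply l p1 v) = mat_apply m p2 (mat_apply l ph v)) \<longleftrightarrow>
    (\<forall>i<length l. mat_apply a f (\<lambda>p. p1 p (i, 0)) = mat_apply m p2 (\<lambda>p. ph p (i, 0)))"
proof -
  obtain xs where xs: "\<And>i. i < length l \<Longrightarrow> xs i \<in> vecs a" and p1e: "p1 = gen_map l a xs"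
    using p1 homT_gen[OF l0] by blast
  obtain ws where ws: "\<And>i. i < length l \<Longrightarrow> ws i \<in> vecs m" and phe: "ph = gen_map l m ws"
    using ph homT_gen[OF l0] by blast
  have "(\<forall>v\<in>vecs l. mat_apply a f (mat_apply l p1 v) = mat_apply m p2 (mat_apply l ph v)) \<longleftrightarrow>
     (\<forall>v\<in>vecs l. mat_apply l (\<lambda>p q. mat_apply a f (\<lambda>s. p1 s q) p) v = mat_apply l (\<lambda>p q. mat_apply m p2 (\<lambda>s. ph s q) p) v)"
    by (simp add: mat_comp)
  also have "\<dots> \<longleftrightarrow> (\<forall>p. \<forall>q\<in>idx l. mat_apply a f (\<lambda>s. p1 s q) p = mat_apply m p2 (\<lambda>s. ph s q) p)"
    by (rule mat_ext)
  also have "\<dots> \<longleftrightarrow> (\<forall>i j. (i, j) \<in> idx l \<longrightarrow> (shiftT b ^^ j) (mat_apply a f (xs i)) = (shiftT b ^^ j) (mat_apply m p2 (ws i)))"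
  proof -
    have "(i, j) \<in> idx l \<Longrightarrow> mat_apply a f (\<lambda>s. p1 s (i, j)) = (shiftT b ^^ j) (mat_apply a f (xs i))" for i j
      using gen_map_col[of i j l a xs] homT_comm[OF f xs] by (simp add: p1e idx_def)
    moreover have "(i, j) \<in> idx l \<Longrightarrow> mat_apply m p2 (\<lambda>s. ph s (i, j)) = (shiftT b ^^ j) (mat_apply m p2 (ws i))" for i j
      using gen_map_col[of i j l m ws] homT_comm[OF p2 ws] by (simp add: phe idx_def)
    ultimately show ?thesis unfolding Ball_def split_paired_All by (auto simp: fun_eq_iff)
  qed
  also have "\<dots> \<longleftrightarrow> (\<forall>i<length l. mat_apply a f (xs i) = mat_apply m p2 (ws i))"
  proof
    assume h: "\<forall>i j. (i, j) \<in> idx l \<longrightarrow> (shiftT b ^^ j) (mat_apply a f (xs i)) = (shiftT b ^^ j) (mat_apply m p2 (ws i))"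
    show "\<forall>i<length l. mat_apply a f (xs i) = mat_apply m p2 (ws i)"
      using h idx0[OF _ l0] by fastforce
  qed (auto simp: idx_def)
  also have "\<dots> \<longleftrightarrow> (\<forall>i<length l. mat_apply a f (\<lambda>p. p1 p (i, 0)) = mat_apply m p2 (\<lambda>p. ph p (i, 0)))"
  proof -
    have c1: "i < length l \<Longrightarrow> (\<lambda>p. p1 p (i, 0)) = xs i" for i
      using gen_map_col[OF idx0[OF _ l0], of i a xs] by (simp add: p1e)
    have c2: "i < length l \<Longrightarrow> (\<lambda>p. ph p (i, 0)) = ws i" for i
      using gen_map_col[OF idx0[OF _ l0], of i m ws] by (simp add: phe)
    show ?thesis using c1 c2 by auto
  qed
  finally show ?thesis .
qed

interpretation MV: vector_space "scaleM :: 'k::field \<Rightarrow> _" by (rule vs_scaleM)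
interpretation VV: vector_space "svec :: 'k::field \<Rightarrow> _" by (rule vs_svec)

lemma homT_add: "homT a b M \<Longrightarrow> homT a b N \<Longrightarrow> homT a b (M + N)"
  by (simp add: homT_def mat_apply_addM shiftT_add)

lemma homT_scale: "homT a b M \<Longrightarrow> homT a b (\<lambda>p q. c * M p q)"
  by (simp add: homT_def mat_apply_scaleM shiftT_svec)

lemma homT_zero: "homT a b 0"
  by (simp add: homT_def mat_apply_zeroM shiftT_zero)

lemma Hom_subspace: "MV.subspace (Hom X Y)"
proof -
  obtain l m ph where X: "X = (l, m, ph)" by (cases X)
  obtain a b f where Y: "Y = (a, b, f)" by (cases Y)
  show ?thesis
    unfolding MV.subspace_def X Y Hom_def
    by (auto simp: homT_add homT_scale homT_zero scaleM_def mat_apply_addM mat_apply_add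
        mat_apply_scaleM mat_apply_svec mat_apply_zeroM mat_apply_zero zero_prod_def)
qed

lemma plist_pos: "0 < l \<Longrightarrow> plist l = [l]"
  by (simp add: plist_def)

lemma gen_map_single: "gen_map [l] b ws = gen_map [l] b (\<lambda>_. ws 0)"
  by (rule gen_map_cong) simp

lemma homT_single: "0 < l \<Longrightarrow> homT [l] b M \<longleftrightarrow> (\<exists>w. w \<in> vecs b \<and> (shiftT b ^^ l) w = (\<lambda>_. 0) \<and> M = gen_map [l] b (\<lambda>_. w))"
proof -
  assume l: "0 < l"
  have "homT [l] b M \<longleftrightarrow> (\<exists>ws. (\<forall>i<length [l]. ws i \<in> vecs b \<and> (shiftT b ^^ ([l] ! i)) (ws i) = (\<lambda>_. 0)) \<and> M = gen_map [l] b ws)"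
    using l by (intro homT_gen) simp
  also have "\<dots> \<longleftrightarrow> (\<exists>w. w \<in> vecs b \<and> (shiftT b ^^ l) w = (\<lambda>_. 0) \<and> M = gen_map [l] b (\<lambda>_. w))"
  proof
    assume "\<exists>ws. (\<forall>i<length [l]. ws i \<in> vecs b \<and> (shiftT b ^^ ([l] ! i)) (ws i) = (\<lambda>_. 0)) \<and> M = gen_map [l] b ws"
    then obtain ws where "ws 0 \<in> vecs b" "(shiftT b ^^ l) (ws 0) = (\<lambda>_. 0)" "M = gen_map [l] b ws" by auto
    then show "\<exists>w. w \<in> vecs b \<and> (shiftT b ^^ l) w = (\<lambda>_. 0) \<and> M = gen_map [l] b (\<lambda>_. w)"
      using gen_map_single by metis
  next
    assume "\<exists>w. w \<in> vecs b \<and> (shiftT b ^^ l) w = (\<lambda>_. 0) \<and> M = gen_map [l] b (\<lambda>_. w)"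
    then obtain w where "w \<in> vecs b" "(shiftT b ^^ l) w = (\<lambda>_. 0)" "M = gen_map [l] b (\<lambda>_. w)" by blast
    then show "\<exists>ws. (\<forall>i<length [l]. ws i \<in> vecs b \<and> (shiftT b ^^ ([l] ! i)) (ws i) = (\<lambda>_. 0)) \<and> M = gen_map [l] b ws"
      by (intro exI[of _ "\<lambda>_. w"]) auto
  qed
  finally show ?thesis .
qed

lemma homT_double: "0 < m \<Longrightarrow> 0 < r \<Longrightarrow> homT [m, r] b M \<longleftrightarrow> (\<exists>y1 y2. y1 \<in> vecs b \<and> (shiftT b ^^ m) y1 = (\<lambda>_. 0)
   \<and> y2 \<in> vecs b \<and> (shiftT b ^^ r) y2 = (\<lambda>_. 0) \<and> M = gen_map [m, r] b (\<lambda>i. if i = 0 then y1 else y2))"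
proof -
  assume m: "0 < m" and r: "0 < r"
  have "homT [m, r] b M \<longleftrightarrow> (\<exists>ws. (\<forall>i<length [m, r]. ws i \<in> vecs b \<and> (shiftT b ^^ ([m, r] ! i)) (ws i) = (\<lambda>_. 0)) \<and> M = gen_map [m, r] b ws)"
    using m r by (intro homT_gen) simp
  also have "\<dots> \<longleftrightarrow> (\<exists>y1 y2. y1 \<in> vecs b \<and> (shiftT b ^^ m) y1 = (\<lambda>_. 0)
   \<and> y2 \<in> vecs b \<and> (shiftT b ^^ r) y2 = (\<lambda>_. 0) \<and> M = gen_map [m, r] b (\<lambda>i. if i = 0 then y1 else y2))" (is "?L \<longleftrightarrow> ?R")
  proof
    assume ?L
    then obtain ws where ws: "\<forall>i<length [m, r]. ws i \<in> vecs b \<and> (shiftT b ^^ ([m, r] ! i)) (ws i) = (\<lambda>_. 0)" "M = gen_map [m, r] b ws" by blast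
    have "gen_map [m, r] b ws = gen_map [m, r] b (\<lambda>i. if i = 0 then ws 0 else ws 1)"
      by (rule gen_map_cong) (auto simp: less_Suc_eq)
    then show ?R using ws(1)[rule_format, of 0] ws(1)[rule_format, of 1] ws(2) by (intro exI[of _ "ws 0"] exI[of _ "ws 1"]) auto
  next
    assume ?R
    then obtain y1 y2 where "y1 \<in> vecs b" "(shiftT b ^^ m) y1 = (\<lambda>_. 0)"
      "y2 \<in> vecs b" "(shiftT b ^^ r) y2 = (\<lambda>_. 0)" "M = gen_map [m, r] b (\<lambda>i. if i = 0 then y1 else y2)" by blast
    then show ?L by (intro exI[of _ "\<lambda>i. if i = 0 then y1 else y2"]) (auto simp: less_2_cases_iff)
  qed
  finally show ?thesis .
qed

lemma col00_single: "0 < l \<Longrightarrow> (\<lambda>p. gen_map [l] b (\<lambda>_. w) p (0, 0)) = w"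
  using gen_map_col[of 0 0 "[l]" b "\<lambda>_. w"] by (simp add: idx_def)

lemma Hom_picket:
  assumes l: "0 < l" and lm: "l \<le> m" and f: "homT a b f"
  shows "Hom (picket l m) (a, b, f) = {(gen_map [l] a (\<lambda>_. x), gen_map [m] b (\<lambda>_. y)) | x y.
      x \<in> vecs a \<and> (shiftT a ^^ l) x = (\<lambda>_. 0) \<and> y \<in> vecs b \<and> (shiftT b ^^ m) y = (\<lambda>_. 0)
      \<and> mat_apply a f x = (shiftT b ^^ (m - l)) y}"
proof -
  have m: "0 < m" using l lm by simp
  define w :: "nat \<times> nat \<Rightarrow> 'a" where "w = basisv (0, m - l)"
  have wv: "w \<in> vecs [m]" using l m by (auto simp: w_def intro!: basisv_vecs simp: idx_def)
  have wT: "(shiftT [m] ^^ l) w = (\<lambda>_. 0)"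
    using funpow_shift[OF wv, of l] lm by (auto simp: fun_eq_iff w_def basisv_def idx_def)
  have ph: "homT [l] [m] (gen_map [l] [m] (\<lambda>_. w))"
    using homT_single[OF l] wv wT by blast
  have pic: "picket l m = ([l], [m], gen_map [l] [m] (\<lambda>_. w))"
    by (simp add: picket_def plist_pos[OF l] plist_pos[OF m] cyc_map_gen w_def)
  have app: "mat_apply [m] (gen_map [m] b (\<lambda>_. y)) w = (shiftT b ^^ (m - l)) y" for y
    unfolding w_def using l m by (subst gen_map_apply_basis) (auto simp: idx_def)
  show ?thesis
  proof (intro set_eqI iffI)
    fix P assume "P \<in> Hom (picket l m) (a, b, f)"
    then obtain p1 p2 where P: "P = (p1, p2)" and h1: "homT [l] a p1" and h2: "homT [m] b p2"
      and c: "\<forall>v\<in>vecs [l]. mat_apply a f (mat_apply [l] p1 v) = mat_apply [m] p2 (mat_apply [l] (gen_map [l] [m] (\<lambda>_. w)) v)"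
      unfolding pic Hom_def by auto
    obtain x where x: "x \<in> vecs a" "(shiftT a ^^ l) x = (\<lambda>_. 0)" "p1 = gen_map [l] a (\<lambda>_. x)"
      using h1 homT_single[OF l] by blast
    obtain y where y: "y \<in> vecs b" "(shiftT b ^^ m) y = (\<lambda>_. 0)" "p2 = gen_map [m] b (\<lambda>_. y)"
      using h2 homT_single[OF m] by blast
    have "mat_apply a f (\<lambda>p. p1 p (0, 0)) = mat_apply [m] p2 (\<lambda>p. gen_map [l] [m] (\<lambda>_. w) p (0, 0))"
      using c hom_cond[of "[l]" a p1 "[m]" "gen_map [l] [m] (\<lambda>_. w)" b p2 f] h1 h2 ph f l by auto
    moreover have c1: "(\<lambda>p. gen_map [l] a (\<lambda>_. x) p (0, 0)) = x" by (rule col00_single[OF l])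
    moreover have c2: "(\<lambda>p. gen_map [l] [m] (\<lambda>_. w) p (0, 0)) = w" by (rule col00_single[OF l])
    ultimately have "mat_apply a f x = (shiftT b ^^ (m - l)) y"
      using app x(3) y(3) by simp
    then show "P \<in> {(gen_map [l] a (\<lambda>_. x), gen_map [m] b (\<lambda>_. y)) | x y.
      x \<in> vecs a \<and> (shiftT a ^^ l) x = (\<lambda>_. 0) \<and> y \<in> vecs b \<and> (shiftT b ^^ m) y = (\<lambda>_. 0)
      \<and> mat_apply a f x = (shiftT b ^^ (m - l)) y}"
      using P x y by blast
  next
    fix P assume "P \<in> {(gen_map [l] a (\<lambda>_. x), gen_map [m] b (\<lambda>_. y)) | x y.
      x \<in> vecs a \<and> (shiftT a ^^ l) x = (\<lambda>_. 0) \<and> y \<in> vecs b \<and> (shiftT b ^^ m) y = (\<lambda>_. 0)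
      \<and> mat_apply a f x = (shiftT b ^^ (m - l)) y}"
    then obtain x y where P: "P = (gen_map [l] a (\<lambda>_. x), gen_map [m] b (\<lambda>_. y))"
      and x: "x \<in> vecs a" "(shiftT a ^^ l) x = (\<lambda>_. 0)"
      and y: "y \<in> vecs b" "(shiftT b ^^ m) y = (\<lambda>_. 0)" and e: "mat_apply a f x = (shiftT b ^^ (m - l)) y"
      by blast
    have h1: "homT [l] a (gen_map [l] a (\<lambda>_. x))" using homT_single[OF l] x by blast
    have h2: "homT [m] b (gen_map [m] b (\<lambda>_. y))" using homT_single[OF m] y by blast
    have "\<forall>v\<in>vecs [l]. mat_apply a f (mat_apply [l] (gen_map [l] a (\<lambda>_. x)) v) =
       mat_apply [m] (gen_map [m] b (\<lambda>_. y)) (mat_apply [l] (gen_map [l] [m] (\<lambda>_. w)) v)"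
    proof -
      have c1: "(\<lambda>p. gen_map [l] a (\<lambda>_. x) p (0, 0)) = x" by (rule col00_single[OF l])
      have c2: "(\<lambda>p. gen_map [l] [m] (\<lambda>_. w) p (0, 0)) = w" by (rule col00_single[OF l])
      have "mat_apply a f (\<lambda>p. gen_map [l] a (\<lambda>_. x) p (0, 0)) = mat_apply [m] (gen_map [m] b (\<lambda>_. y)) (\<lambda>p. gen_map [l] [m] (\<lambda>_. w) p (0, 0))"
        by (simp only: c1 c2 app e)
      then show ?thesis using hom_cond[OF _ h1 ph h2 f] l by auto
    qed
    then show "P \<in> Hom (picket l m) (a, b, f)" unfolding pic Hom_def P using h1 h2 by auto
  qed
qed

lemma vecs_add: "u \<in> vecs a \<Longrightarrow> v \<in> vecs a \<Longrightarrow> u + v \<in> vecs a"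
  by (simp add: vecs_def)

lemma Hom_bipicket:
  assumes m: "2 \<le> m" and r: "0 < r" and f: "homT a b f"
  shows "Hom (bipicket m r) (a, b, f) = {(gen_map [2] a (\<lambda>_. x), gen_map [m, r] b (\<lambda>i. if i = 0 then y1 else y2)) | x y1 y2.
      x \<in> vecs a \<and> (shiftT a ^^ 2) x = (\<lambda>_. 0) \<and> y1 \<in> vecs b \<and> (shiftT b ^^ m) y1 = (\<lambda>_. 0)
      \<and> y2 \<in> vecs b \<and> (shiftT b ^^ r) y2 = (\<lambda>_. 0)
      \<and> mat_apply a f x = (shiftT b ^^ (m - 2)) y1 + (shiftT b ^^ (r - 1)) y2}"
proof -
  have m0: "0 < m" using m by simp
  have l: "0 < (2::nat)" by simp
  define w :: "nat \<times> nat \<Rightarrow> 'a" where "w = basisv (0, m - 2) + basisv (1, r - 1)"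
  have w1: "basisv (0, m - 2) \<in> vecs [m, r]" using m r by (intro basisv_vecs) (auto simp: idx_def)
  have w2: "basisv (1, r - 1) \<in> vecs [m, r]" using m r by (intro basisv_vecs) (auto simp: idx_def)
  have wv: "w \<in> vecs [m, r]" unfolding w_def by (rule vecs_add[OF w1 w2])
  have wT1: "(shiftT [m, r] ^^ 2) (basisv (0, m - 2)) = (\<lambda>_. (0::'a))"
  proof -
    have "(shiftT [m, r] ^^ 2) (basisv (0, m - 2)) = (\<lambda>(i, j). if (i, j) \<in> idx [m, r] \<and> 2 \<le> j then basisv (0, m - 2) (i, j - 2) else (0::'a))"
      by (rule funpow_shift[OF w1])
    also have "\<dots> = (\<lambda>_. 0)"
    proof (rule ext, clarify)
      fix i j
      show "(if (i, j) \<in> idx [m, r] \<and> 2 \<le> j then basisv (0, m - 2) (i, j - 2) else (0::'a)) = 0"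
        using m by (cases i) (auto simp: basisv_def idx_def)
    qed
    finally show ?thesis .
  qed
  have wT2: "(shiftT [m, r] ^^ 2) (basisv (1, r - 1)) = (\<lambda>_. (0::'a))"
  proof -
    have "(shiftT [m, r] ^^ 2) (basisv (1, r - 1)) = (\<lambda>(i, j). if (i, j) \<in> idx [m, r] \<and> 2 \<le> j then basisv (1, r - 1) (i, j - 2) else (0::'a))"
      by (rule funpow_shift[OF w2])
    also have "\<dots> = (\<lambda>_. 0)"
    proof (rule ext, clarify)
      fix i j
      show "(if (i, j) \<in> idx [m, r] \<and> 2 \<le> j then basisv (1, r - 1) (i, j - 2) else (0::'a)) = 0"
        using r by (cases i) (auto simp: basisv_def idx_def)
    qed
    finally show ?thesis .
  qed
  have wT: "(shiftT [m, r] ^^ 2) w = (\<lambda>_. 0)"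
    unfolding w_def funpow_add_v wT1 wT2 by (simp add: fun_eq_iff)
  have ph: "homT [2] [m, r] (gen_map [2] [m, r] (\<lambda>_. w))"
    using homT_single[OF l] wv wT by blast
  have pic: "bipicket m r = ([2], [m, r], gen_map [2] [m, r] (\<lambda>_. w))"
    by (simp add: bipicket_def plist_pos cyc_map_gen w_def)
  have app: "mat_apply [m, r] (gen_map [m, r] b (\<lambda>i. if i = 0 then y1 else y2)) w = (shiftT b ^^ (m - 2)) y1 + (shiftT b ^^ (r - 1)) y2" for y1 y2
  proof -
    have "mat_apply [m, r] (gen_map [m, r] b (\<lambda>i. if i = 0 then y1 else y2)) w =
      mat_apply [m, r] (gen_map [m, r] b (\<lambda>i. if i = 0 then y1 else y2)) (basisv (0, m - 2)) +
      mat_apply [m, r] (gen_map [m, r] b (\<lambda>i. if i = 0 then y1 else y2)) (basisv (1, r - 1))"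
      unfolding w_def by (rule mat_apply_add)
    also have "\<dots> = (shiftT b ^^ (m - 2)) y1 + (shiftT b ^^ (r - 1)) y2"
      using m r by (subst gen_map_apply_basis, simp add: idx_def)+ simp
    finally show ?thesis .
  qed
  have c2: "(\<lambda>p. gen_map [2] [m, r] (\<lambda>_. w) p (0, 0)) = w" by (rule col00_single[OF l])
  show ?thesis
  proof (intro set_eqI iffI)
    fix P assume "P \<in> Hom (bipicket m r) (a, b, f)"
    then obtain p1 p2 where P: "P = (p1, p2)" and h1: "homT [2] a p1" and h2: "homT [m, r] b p2"
      and c: "\<forall>v\<in>vecs [2]. mat_apply a f (mat_apply [2] p1 v) = mat_apply [m, r] p2 (mat_apply [2] (gen_map [2] [m, r] (\<lambda>_. w)) v)"
      unfolding pic Hom_def by auto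
    obtain x where x: "x \<in> vecs a" "(shiftT a ^^ 2) x = (\<lambda>_. 0)" "p1 = gen_map [2] a (\<lambda>_. x)"
      using h1 homT_single[OF l] by blast
    obtain y1 y2 where y: "y1 \<in> vecs b" "(shiftT b ^^ m) y1 = (\<lambda>_. 0)"
      "y2 \<in> vecs b" "(shiftT b ^^ r) y2 = (\<lambda>_. 0)" "p2 = gen_map [m, r] b (\<lambda>i. if i = 0 then y1 else y2)"
      using h2 homT_double[OF m0 r] by blast
    have "mat_apply a f (\<lambda>p. p1 p (0, 0)) = mat_apply [m, r] p2 (\<lambda>p. gen_map [2] [m, r] (\<lambda>_. w) p (0, 0))"
      using c hom_cond[of "[2]" a p1 "[m, r]" "gen_map [2] [m, r] (\<lambda>_. w)" b p2 f] h1 h2 ph f by auto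
    moreover have c1: "(\<lambda>p. gen_map [2] a (\<lambda>_. x) p (0, 0)) = x" by (rule col00_single[OF l])
    ultimately have "mat_apply a f x = (shiftT b ^^ (m - 2)) y1 + (shiftT b ^^ (r - 1)) y2"
      using app x(3) y(5) c2 by simp
    then show "P \<in> {(gen_map [2] a (\<lambda>_. x), gen_map [m, r] b (\<lambda>i. if i = 0 then y1 else y2)) | x y1 y2.
      x \<in> vecs a \<and> (shiftT a ^^ 2) x = (\<lambda>_. 0) \<and> y1 \<in> vecs b \<and> (shiftT b ^^ m) y1 = (\<lambda>_. 0)
      \<and> y2 \<in> vecs b \<and> (shiftT b ^^ r) y2 = (\<lambda>_. 0)
      \<and> mat_apply a f x = (shiftT b ^^ (m - 2)) y1 + (shiftT b ^^ (r - 1)) y2}"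
      using P x y by blast
  next
    fix P assume "P \<in> {(gen_map [2] a (\<lambda>_. x), gen_map [m, r] b (\<lambda>i. if i = 0 then y1 else y2)) | x y1 y2.
      x \<in> vecs a \<and> (shiftT a ^^ 2) x = (\<lambda>_. 0) \<and> y1 \<in> vecs b \<and> (shiftT b ^^ m) y1 = (\<lambda>_. 0)
      \<and> y2 \<in> vecs b \<and> (shiftT b ^^ r) y2 = (\<lambda>_. 0)
      \<and> mat_apply a f x = (shiftT b ^^ (m - 2)) y1 + (shiftT b ^^ (r - 1)) y2}"
    then obtain x y1 y2 where P: "P = (gen_map [2] a (\<lambda>_. x), gen_map [m, r] b (\<lambda>i. if i = 0 then y1 else y2))"
      and x: "x \<in> vecs a" "(shiftT a ^^ 2) x = (\<lambda>_. 0)"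
      and y: "y1 \<in> vecs b" "(shiftT b ^^ m) y1 = (\<lambda>_. 0)" "y2 \<in> vecs b" "(shiftT b ^^ r) y2 = (\<lambda>_. 0)"
      and e: "mat_apply a f x = (shiftT b ^^ (m - 2)) y1 + (shiftT b ^^ (r - 1)) y2"
      by blast
    have h1: "homT [2] a (gen_map [2] a (\<lambda>_. x))" using homT_single[OF l] x by blast
    have h2: "homT [m, r] b (gen_map [m, r] b (\<lambda>i. if i = 0 then y1 else y2))" using homT_double[OF m0 r] y by blast
    have "\<forall>v\<in>vecs [2]. mat_apply a f (mat_apply [2] (gen_map [2] a (\<lambda>_. x)) v) =
       mat_apply [m, r] (gen_map [m, r] b (\<lambda>i. if i = 0 then y1 else y2)) (mat_apply [2] (gen_map [2] [m, r] (\<lambda>_. w)) v)"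
    proof -
      have c1: "(\<lambda>p. gen_map [2] a (\<lambda>_. x) p (0, 0)) = x" by (rule col00_single[OF l])
      have "mat_apply a f (\<lambda>p. gen_map [2] a (\<lambda>_. x) p (0, 0)) = mat_apply [m, r] (gen_map [m, r] b (\<lambda>i. if i = 0 then y1 else y2)) (\<lambda>p. gen_map [2] [m, r] (\<lambda>_. w) p (0, 0))"
        by (simp only: c1 c2 app e)
      then show ?thesis using hom_cond[OF _ h1 ph h2 f] by auto
    qed
    then show "P \<in> Hom (bipicket m r) (a, b, f)" unfolding pic Hom_def P using h1 h2 by auto
  qed
qed

interpretation MVV: vector_space_pair "scaleM :: 'k::field \<Rightarrow> _" "svec :: 'k::field \<Rightarrow> _" by unfold_locales
interpretation VMV: vector_space_pair "svec :: 'k::field \<Rightarrow> _" "scaleM :: 'k::field \<Rightarrow> _" by unfold_locales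
interpretation MMV: vector_space_pair "scaleM :: 'k::field \<Rightarrow> _" "scaleM :: 'k::field \<Rightarrow> _" by unfold_locales
interpretation VVV: vector_space_pair "svec :: 'k::field \<Rightarrow> _" "svec :: 'k::field \<Rightarrow> _" by unfold_locales

lemma linI_MV: "(\<And>P Q. F (P + Q) = F P + F Q) \<Longrightarrow> (\<And>c P. F (scaleM c P) = svec c (F P)) \<Longrightarrow> Vector_Spaces.linear scaleM svec F"
  by (simp add: Vector_Spaces.linear_iff vs_scaleM vs_svec)
lemma linI_VM: "(\<And>P Q. F (P + Q) = F P + F Q) \<Longrightarrow> (\<And>c P. F (svec c P) = scaleM c (F P)) \<Longrightarrow> Vector_Spaces.linear svec scaleM F"
  by (simp add: Vector_Spaces.linear_iff vs_scaleM vs_svec)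
lemma linI_MM: "(\<And>P Q. F (P + Q) = F P + F Q) \<Longrightarrow> (\<And>c P. F (scaleM c P) = scaleM c (F P)) \<Longrightarrow> Vector_Spaces.linear scaleM scaleM F"
  by (simp add: Vector_Spaces.linear_iff vs_scaleM vs_svec)
lemma linI_VV: "(\<And>P Q. F (P + Q) = F P + F Q) \<Longrightarrow> (\<And>c P. F (svec c P) = svec c (F P)) \<Longrightarrow> Vector_Spaces.linear svec svec F"
  by (simp add: Vector_Spaces.linear_iff vs_scaleM vs_svec)

definition phi1 :: "'k::field mat \<times> 'k mat \<Rightarrow> (nat \<times> nat \<Rightarrow> 'k)" where
  "phi1 P = (\<lambda>p. fst P p (0, 0))"
definition phi2 :: "'k::field mat \<times> 'k mat \<Rightarrow> (nat \<times> nat \<Rightarrow> 'k)" where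
  "phi2 P = (\<lambda>p. snd P p (0, 0))"

lemma lin_phi1: "Vector_Spaces.linear scaleM svec (phi1 :: 'k::field mat \<times> 'k mat \<Rightarrow> _)"
  by (rule linI_MV) (auto simp: phi1_def scaleM_def svec_def fun_eq_iff)
lemma lin_phi2: "Vector_Spaces.linear scaleM svec (phi2 :: 'k::field mat \<times> 'k mat \<Rightarrow> _)"
  by (rule linI_MV) (auto simp: phi2_def scaleM_def svec_def fun_eq_iff)

lemma span_Hom: "MV.span (Hom X Y) = Hom X Y"
  using Hom_subspace MV.span_eq_iff by blast

lemma vecs_subspace: "VV.subspace (vecs a)"
  by (auto simp: VV.subspace_def vecs_def svec_def)

lemma vecs_span: "vecs a \<subseteq> VV.span (basisv ` idx a)"
proof
  fix v :: "nat \<times> nat \<Rightarrow> 'a" assume v: "v \<in> vecs a"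
  have "v = (\<Sum>q\<in>idx a. svec (v q) (basisv q))"
  proof (rule ext)
    fix p
    have "(\<Sum>q\<in>idx a. svec (v q) (basisv q)) p = (\<Sum>q\<in>idx a. v q * (if p = q then 1 else 0))"
      by (simp add: sum_app svec_def basisv_def eq_commute)
    also have "\<dots> = (if p \<in> idx a then v p else 0)"
      using sum_delta_mult[OF finite_idx, of v p a] by (simp add: eq_commute)
    also have "\<dots> = v p" using v unfolding vecs_def by (cases p) auto
    finally show "v p = (\<Sum>q\<in>idx a. svec (v q) (basisv q)) p" by simp
  qed
  also have "\<dots> \<in> VV.span (basisv ` idx a)"
    by (intro VV.span_sum VV.span_scale VV.span_base) auto
  finally show "v \<in> VV.span (basisv ` idx a)" .
qed

lemma fdim_vecs: "\<exists>F. finite F \<and> vecs a \<subseteq> VV.span F"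
  using vecs_span finite_idx by blast

lemma dim_P11:
  fixes f :: "'a::field mat"
  assumes f: "homT a b f" and inj: "inj_on (mat_apply a f) (vecs a)"
  shows "MV.dim (Hom (picket 1 1) (a, b, f)) = VV.dim {x :: nat \<times> nat \<Rightarrow> 'a. x \<in> vecs a \<and> (shiftT a ^^ 1) x = (\<lambda>_. 0)}"
proof -
  have H: "Hom (picket 1 1) (a, b, f) = {(gen_map [1] a (\<lambda>_. x), gen_map [1] b (\<lambda>_. y)) | x y.
      x \<in> vecs a \<and> (shiftT a ^^ 1) x = (\<lambda>_. 0) \<and> y \<in> vecs b \<and> (shiftT b ^^ 1) y = (\<lambda>_. 0)
      \<and> mat_apply a f x = (shiftT b ^^ (1 - 1)) y}"
    by (rule Hom_picket[OF _ _ f]) auto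
  have c: "phi1 (gen_map [1] a (\<lambda>_. x), Q) = x" for x :: "nat \<times> nat \<Rightarrow> 'a" and Q
    using col00_single[of 1 a x] by (simp add: phi1_def)
  have img: "phi1 ` Hom (picket 1 1) (a, b, f) = {x \<in> vecs a. (shiftT a ^^ 1) x = (\<lambda>_. 0)}"
  proof (intro set_eqI iffI)
    fix x :: "nat \<times> nat \<Rightarrow> 'a" assume "x \<in> phi1 ` Hom (picket 1 1) (a, b, f)"
    then obtain x' y where "x = phi1 (gen_map [1] a (\<lambda>_. x'), gen_map [1] b (\<lambda>_. y))"
      "x' \<in> vecs a" "(shiftT a ^^ 1) x' = (\<lambda>_. 0)" unfolding H by blast
    then show "x \<in> {x \<in> vecs a. (shiftT a ^^ 1) x = (\<lambda>_. 0)}" by (simp only: c) simp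
  next
    fix x :: "nat \<times> nat \<Rightarrow> 'a" assume x: "x \<in> {x \<in> vecs a. (shiftT a ^^ 1) x = (\<lambda>_. 0)}"
    have "(shiftT b ^^ 1) (mat_apply a f x) = (\<lambda>_. 0)"
    proof -
      have "(shiftT b ^^ 1) (mat_apply a f x) = mat_apply a f ((shiftT a ^^ 1) x)"
        using homT_comm[OF f, of x 1] x by simp
      also have "\<dots> = (\<lambda>_. 0)" using x by (simp only: mem_Collect_eq mat_apply_zero)
      finally show ?thesis .
    qed
    then have "(gen_map [1] a (\<lambda>_. x), gen_map [1] b (\<lambda>_. mat_apply a f x)) \<in> Hom (picket 1 1) (a, b, f)"
      unfolding H using x homT_vecs[OF f] by auto
    then show "x \<in> phi1 ` Hom (picket 1 1) (a, b, f)" using c by (metis image_eqI)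
  qed
  have "inj_on phi1 (MV.span (Hom (picket 1 1) (a, b, f)))"
    unfolding span_Hom
  proof (rule inj_onI)
    fix P Q assume "P \<in> Hom (picket 1 1) (a, b, f)" "Q \<in> Hom (picket 1 1) (a, b, f)" "phi1 P = phi1 Q"
    then obtain x y x' y' where P: "P = (gen_map [1] a (\<lambda>_. x), gen_map [1] b (\<lambda>_. y))"
      and Q: "Q = (gen_map [1] a (\<lambda>_. x'), gen_map [1] b (\<lambda>_. y'))"
      and e: "mat_apply a f x = y" "mat_apply a f x' = y'" unfolding H by auto
    have "x = x'" using \<open>phi1 P = phi1 Q\<close> unfolding P Q by (simp only: c)
    then show "P = Q" using P Q e by simp
  qed
  then have "VV.dim (phi1 ` Hom (picket 1 1) (a, b, f)) = MV.dim (Hom (picket 1 1) (a, b, f))"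
    by (rule MVV.dim_image_eq_gen[OF lin_phi1])
  then show ?thesis using img by simp
qed

lemma zfun: "(\<lambda>_. 0) = (0 :: 'b \<Rightarrow> 'a::zero)"
  by (simp add: zero_fun_def)

lemma funpow_split: "2 \<le> m \<Longrightarrow> (shiftT b ^^ m) y = (shiftT b ^^ 2) ((shiftT b ^^ (m - 2)) y)"
  by (metis funpow_add le_add_diff_inverse comp_apply)

lemma dim_P2m:
  fixes f g :: "'a::field mat"
  assumes f: "homT a b f" and inj: "inj_on (mat_apply a f) (vecs a)"
    and a2: "\<forall>x :: nat \<times> nat \<Rightarrow> 'a. x \<in> vecs a \<longrightarrow> (shiftT a ^^ 2) x = (\<lambda>_. 0)"
    and g: "homT b c g" and gs: "mat_apply b g ` vecs b = vecs c"
    and ker: "{v \<in> vecs b. mat_apply b g v = (\<lambda>_. 0)} = mat_apply a f ` vecs a"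
    and m: "2 \<le> m"
  shows "MV.dim (Hom (picket 2 m) (a, b, f)) + VV.dim ((shiftT c ^^ (m - 2)) ` (vecs c :: (nat \<times> nat \<Rightarrow> 'a) set))
     = VV.dim (vecs b :: (nat \<times> nat \<Rightarrow> 'a) set)"
proof -
  have m0: "0 < m" using m by simp
  have H: "Hom (picket 2 m) (a, b, f) = {(gen_map [2] a (\<lambda>_. x), gen_map [m] b (\<lambda>_. y)) | x y.
      x \<in> vecs a \<and> (shiftT a ^^ 2) x = (\<lambda>_. 0) \<and> y \<in> vecs b \<and> (shiftT b ^^ m) y = (\<lambda>_. 0)
      \<and> mat_apply a f x = (shiftT b ^^ (m - 2)) y}"
    by (rule Hom_picket[OF _ m f]) auto
  define A where "A = {y :: nat \<times> nat \<Rightarrow> 'a. y \<in> vecs b \<and> (shiftT b ^^ m) y = (\<lambda>_. 0) \<and>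
     (\<exists>x\<in>vecs a. (shiftT a ^^ 2) x = (\<lambda>_. 0) \<and> mat_apply a f x = (shiftT b ^^ (m - 2)) y)}"
  have c: "phi2 (Q, gen_map [m] b (\<lambda>_. y)) = y" for y :: "nat \<times> nat \<Rightarrow> 'a" and Q
    using col00_single[OF m0, of b y] by (simp add: phi2_def)
  have img: "phi2 ` Hom (picket 2 m) (a, b, f) = A"
  proof (intro set_eqI iffI)
    fix y :: "nat \<times> nat \<Rightarrow> 'a" assume "y \<in> phi2 ` Hom (picket 2 m) (a, b, f)"
    then obtain x y' where "y = phi2 (gen_map [2] a (\<lambda>_. x), gen_map [m] b (\<lambda>_. y'))"
      "x \<in> vecs a" "(shiftT a ^^ 2) x = (\<lambda>_. 0)" "y' \<in> vecs b" "(shiftT b ^^ m) y' = (\<lambda>_. 0)"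
      "mat_apply a f x = (shiftT b ^^ (m - 2)) y'" unfolding H by blast
    then show "y \<in> A" unfolding A_def by (simp only: c) blast
  next
    fix y :: "nat \<times> nat \<Rightarrow> 'a" assume "y \<in> A"
    then obtain x where "y \<in> vecs b" "(shiftT b ^^ m) y = (\<lambda>_. 0)" "x \<in> vecs a" "(shiftT a ^^ 2) x = (\<lambda>_. 0)"
      "mat_apply a f x = (shiftT b ^^ (m - 2)) y" unfolding A_def by blast
    then have "(gen_map [2] a (\<lambda>_. x), gen_map [m] b (\<lambda>_. y)) \<in> Hom (picket 2 m) (a, b, f)"
      unfolding H by blast
    then show "y \<in> phi2 ` Hom (picket 2 m) (a, b, f)" using c by (metis image_eqI)
  qed
  have "inj_on phi2 (MV.span (Hom (picket 2 m) (a, b, f)))"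
    unfolding span_Hom
  proof (rule inj_onI)
    fix P Q assume "P \<in> Hom (picket 2 m) (a, b, f)" "Q \<in> Hom (picket 2 m) (a, b, f)" "phi2 P = phi2 Q"
    then obtain x y x' y' where P: "P = (gen_map [2] a (\<lambda>_. x), gen_map [m] b (\<lambda>_. y))"
      and Q: "Q = (gen_map [2] a (\<lambda>_. x'), gen_map [m] b (\<lambda>_. y'))"
      and e: "mat_apply a f x = (shiftT b ^^ (m - 2)) y" "mat_apply a f x' = (shiftT b ^^ (m - 2)) y'"
      and xx: "x \<in> vecs a" "x' \<in> vecs a" unfolding H by blast
    have "y = y'" using \<open>phi2 P = phi2 Q\<close> unfolding P Q by (simp only: c)
    then have "x = x'" using e xx inj by (metis inj_onD)
    then show "P = Q" using P Q \<open>y = y'\<close> by simp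
  qed
  then have dH: "VV.dim (phi2 ` Hom (picket 2 m) (a, b, f)) = MV.dim (Hom (picket 2 m) (a, b, f))"
    by (rule MVV.dim_image_eq_gen[OF lin_phi2])
  define h where "h y = mat_apply b g ((shiftT b ^^ (m - 2)) y)" for y :: "nat \<times> nat \<Rightarrow> 'a"
  have lh: "Vector_Spaces.linear svec svec h"
    by (rule linI_VV) (simp_all add: h_def funpow_add_v funpow_svec mat_apply_add mat_apply_svec)
  have Ak: "A = {y \<in> vecs b. h y = 0}"
  proof (intro set_eqI iffI)
    fix y assume "y \<in> A"
    then obtain x where y: "y \<in> vecs b" "x \<in> vecs a" "mat_apply a f x = (shiftT b ^^ (m - 2)) y"
      unfolding A_def by blast
    then have "(shiftT b ^^ (m - 2)) y \<in> mat_apply a f ` vecs a" by (metis image_eqI)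
    then have "(shiftT b ^^ (m - 2)) y \<in> {v \<in> vecs b. mat_apply b g v = (\<lambda>_. 0)}" using ker by simp
    then show "y \<in> {y \<in> vecs b. h y = 0}" using y by (simp add: h_def zfun)
  next
    fix y assume "y \<in> {y \<in> vecs b. h y = 0}"
    then have y: "y \<in> vecs b" "mat_apply b g ((shiftT b ^^ (m - 2)) y) = (\<lambda>_. 0)" by (simp_all add: h_def zfun)
    then have "(shiftT b ^^ (m - 2)) y \<in> {v \<in> vecs b. mat_apply b g v = (\<lambda>_. 0)}"
      using funpow_shift_vecs by blast
    then obtain x where x: "x \<in> vecs a" "mat_apply a f x = (shiftT b ^^ (m - 2)) y" using ker by auto
    have x2: "(shiftT a ^^ 2) x = (\<lambda>_. 0)" using a2 x by blast
    have "(shiftT b ^^ m) y = (shiftT b ^^ 2) (mat_apply a f x)" using funpow_split[OF m] x by simp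
    also have "\<dots> = mat_apply a f ((shiftT a ^^ 2) x)" using homT_comm[OF f x(1)] by simp
    also have "\<dots> = (\<lambda>_. 0)" using x2 mat_apply_zero by simp
    finally show "y \<in> A" unfolding A_def using y x x2 by blast
  qed
  have himg: "h ` vecs b = (shiftT c ^^ (m - 2)) ` vecs c"
  proof -
    have "h y = (shiftT c ^^ (m - 2)) (mat_apply b g y)" if "y \<in> vecs b" for y
      using homT_comm[OF g that] by (simp add: h_def)
    then have "h ` vecs b = (shiftT c ^^ (m - 2)) ` (mat_apply b g ` vecs b)"
      by (simp add: image_image)
    then show ?thesis using gs by simp
  qed
  have "VV.dim (vecs b :: (nat \<times> nat \<Rightarrow> 'a) set) = VV.dim {y \<in> vecs b. h y = 0} + VV.dim (h ` vecs b)"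
    by (rule VV.rank_nullity_gen[OF lh vecs_subspace fdim_vecs])
  then show ?thesis using Ak himg dH img by simp
qed

definition em :: "(nat \<times> nat \<Rightarrow> 'k::field) \<Rightarrow> 'k mat" where
  "em y = (\<lambda>p q. y p)"
definition E1 :: "(nat \<times> nat \<Rightarrow> 'k::field) \<Rightarrow> 'k mat \<times> 'k mat" where
  "E1 y = (em y, 0)"
definition E2 :: "(nat \<times> nat \<Rightarrow> 'k::field) \<Rightarrow> 'k mat \<times> 'k mat" where
  "E2 y = (0, em y)"
definition phiB :: "'k::field mat \<times> 'k mat \<Rightarrow> 'k mat \<times> 'k mat" where
  "phiB P = ((\<lambda>p q. snd P p (0, 0)), (\<lambda>p q. snd P p (1, 0)))"

lemma em_inj: "em y = em y' \<Longrightarrow> y = y'"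
  unfolding em_def by (metis ext)

lemma lin_E1: "Vector_Spaces.linear svec scaleM (E1 :: _ \<Rightarrow> 'k::field mat \<times> _)"
  by (rule linI_VM) (auto simp: E1_def em_def scaleM_def svec_def fun_eq_iff zero_fun_def)
lemma lin_E2: "Vector_Spaces.linear svec scaleM (E2 :: _ \<Rightarrow> 'k::field mat \<times> _)"
  by (rule linI_VM) (auto simp: E2_def em_def scaleM_def svec_def fun_eq_iff zero_fun_def)
lemma lin_phiB: "Vector_Spaces.linear scaleM scaleM (phiB :: 'k::field mat \<times> 'k mat \<Rightarrow> _)"
  by (rule linI_MM) (auto simp: phiB_def scaleM_def fun_eq_iff)

lemma inj_E1: "inj E1" by (rule injI) (auto simp: E1_def dest: em_inj)
lemma inj_E2: "inj E2" by (rule injI) (auto simp: E2_def dest: em_inj)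

lemma kill:
  assumes y: "y \<in> vecs b" and big: "\<forall>i<length b. b ! i + 2 \<le> m" and n: "m - 2 \<le> n"
  shows "(shiftT b ^^ n) y = (\<lambda>_. 0)"
proof (rule ext, clarify)
  fix i j
  show "(shiftT b ^^ n) y (i, j) = 0"
  proof (cases "(i, j) \<in> idx b")
    case True
    then have "j < b ! i" "i < length b" by (auto simp: idx_def)
    then have "\<not> n \<le> j" using big n by fastforce
    then show ?thesis using funpow_shift[OF y, of n] by simp
  next
    case False
    then show ?thesis using funpow_shift_vecs[OF y, of n] by (auto simp: vecs_def)
  qed
qed

lemma fdim_img:
  assumes lin: "Vector_Spaces.linear svec scaleM F" and S: "S \<subseteq> vecs b"
  shows "\<exists>G. finite G \<and> F ` S \<subseteq> MV.span G"
proof -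
  have "F ` S \<subseteq> F ` VV.span (basisv ` idx b)" using S vecs_span by blast
  also have "\<dots> = MV.span (F ` basisv ` idx b)" by (rule VMV.linear_span_image[OF lin, symmetric])
  finally have "F ` S \<subseteq> MV.span (F ` basisv ` idx b)" .
  moreover have "finite (F ` basisv ` idx b)" using finite_idx by simp
  ultimately show ?thesis by (intro exI[of _ "F ` basisv ` idx b"]) simp
qed

lemma dim_B:
  fixes f :: "'a::field mat"
  assumes f: "homT a b f" and inj: "inj_on (mat_apply a f) (vecs a)"
    and m: "2 \<le> m" and big: "\<forall>i<length b. b ! i + 2 \<le> m" and r: "0 < r"
  shows "MV.dim (Hom (bipicket m r) (a, b, f)) = VV.dim (vecs b :: (nat \<times> nat \<Rightarrow> 'a) set) + MV.dim (Hom (picket 1 r) (a, b, f))"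
proof -
  have HP: "Hom (picket 1 r) (a, b, f) = {(gen_map [1] a (\<lambda>_. x), gen_map [r] b (\<lambda>_. y)) | x y.
      x \<in> vecs a \<and> (shiftT a ^^ 1) x = (\<lambda>_. 0) \<and> y \<in> vecs b \<and> (shiftT b ^^ r) y = (\<lambda>_. 0)
      \<and> mat_apply a f x = (shiftT b ^^ (r - 1)) y}"
    using r by (intro Hom_picket[OF _ _ f]) auto
  define W where "W = {y :: nat \<times> nat \<Rightarrow> 'a. y \<in> vecs b \<and> (shiftT b ^^ r) y = (\<lambda>_. 0) \<and>
     (\<exists>x\<in>vecs a. (shiftT a ^^ 1) x = (\<lambda>_. 0) \<and> mat_apply a f x = (shiftT b ^^ (r - 1)) y)}"
  have c: "phi2 (Q, gen_map [r] b (\<lambda>_. y)) = y" for y :: "nat \<times> nat \<Rightarrow> 'a" and Q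
    using col00_single[OF r, of b y] by (simp add: phi2_def)
  have img: "phi2 ` Hom (picket 1 r) (a, b, f) = W"
  proof (intro set_eqI iffI)
    fix y :: "nat \<times> nat \<Rightarrow> 'a" assume "y \<in> phi2 ` Hom (picket 1 r) (a, b, f)"
    then obtain x y' where "y = phi2 (gen_map [1] a (\<lambda>_. x), gen_map [r] b (\<lambda>_. y'))"
      "x \<in> vecs a" "(shiftT a ^^ 1) x = (\<lambda>_. 0)" "y' \<in> vecs b" "(shiftT b ^^ r) y' = (\<lambda>_. 0)"
      "mat_apply a f x = (shiftT b ^^ (r - 1)) y'" unfolding HP by blast
    then show "y \<in> W" unfolding W_def by (simp only: c) blast
  next
    fix y :: "nat \<times> nat \<Rightarrow> 'a" assume "y \<in> W"
    then obtain x where "y \<in> vecs b" "(shiftT b ^^ r) y = (\<lambda>_. 0)" "x \<in> vecs a" "(shiftT a ^^ 1) x = (\<lambda>_. 0)"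
      "mat_apply a f x = (shiftT b ^^ (r - 1)) y" unfolding W_def by blast
    then have "(gen_map [1] a (\<lambda>_. x), gen_map [r] b (\<lambda>_. y)) \<in> Hom (picket 1 r) (a, b, f)"
      unfolding HP by blast
    then show "y \<in> phi2 ` Hom (picket 1 r) (a, b, f)" using c by (metis image_eqI)
  qed
  have "inj_on phi2 (MV.span (Hom (picket 1 r) (a, b, f)))"
    unfolding span_Hom
  proof (rule inj_onI)
    fix P Q assume "P \<in> Hom (picket 1 r) (a, b, f)" "Q \<in> Hom (picket 1 r) (a, b, f)" "phi2 P = phi2 Q"
    then obtain x y x' y' where P: "P = (gen_map [1] a (\<lambda>_. x), gen_map [r] b (\<lambda>_. y))"
      and Q: "Q = (gen_map [1] a (\<lambda>_. x'), gen_map [r] b (\<lambda>_. y'))"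
      and e: "mat_apply a f x = (shiftT b ^^ (r - 1)) y" "mat_apply a f x' = (shiftT b ^^ (r - 1)) y'"
      and xx: "x \<in> vecs a" "x' \<in> vecs a" unfolding HP by blast
    have "y = y'" using \<open>phi2 P = phi2 Q\<close> unfolding P Q by (simp only: c)
    then have "x = x'" using e xx inj by (metis inj_onD)
    then show "P = Q" using P Q \<open>y = y'\<close> by simp
  qed
  then have dP: "VV.dim (phi2 ` Hom (picket 1 r) (a, b, f)) = MV.dim (Hom (picket 1 r) (a, b, f))"
    by (rule MVV.dim_image_eq_gen[OF lin_phi2])
  have Wsub: "VV.subspace W"
    using MVV.linear_subspace_image[OF lin_phi2 Hom_subspace] img by metis
  have Wvecs: "W \<subseteq> vecs b" unfolding W_def by blast
  have HB: "Hom (bipicket m r) (a, b, f) = {(gen_map [2] a (\<lambda>_. x), gen_map [m, r] b (\<lambda>i. if i = 0 then y1 else y2)) | x y1 y2.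
      x \<in> vecs a \<and> (shiftT a ^^ 2) x = (\<lambda>_. 0) \<and> y1 \<in> vecs b \<and> (shiftT b ^^ m) y1 = (\<lambda>_. 0)
      \<and> y2 \<in> vecs b \<and> (shiftT b ^^ r) y2 = (\<lambda>_. 0)
      \<and> mat_apply a f x = (shiftT b ^^ (m - 2)) y1 + (shiftT b ^^ (r - 1)) y2}"
    by (rule Hom_bipicket[OF m r f])
  have cB: "phiB (Q, gen_map [m, r] b (\<lambda>i. if i = 0 then y1 else y2)) = E1 y1 + E2 y2"
    for y1 y2 :: "nat \<times> nat \<Rightarrow> 'a" and Q
  proof -
    have "(\<lambda>p. gen_map [m, r] b (\<lambda>i. if i = 0 then y1 else y2) p (0, 0)) = y1"
      using gen_map_col[of 0 0 "[m, r]" b "\<lambda>i. if i = 0 then y1 else y2"] m by (simp add: idx_def)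
    moreover have "(\<lambda>p. gen_map [m, r] b (\<lambda>i. if i = 0 then y1 else y2) p (1, 0)) = y2"
      using gen_map_col[of 1 0 "[m, r]" b "\<lambda>i. if i = 0 then y1 else y2"] r by (simp add: idx_def)
    ultimately show ?thesis
      by (simp add: phiB_def E1_def E2_def em_def fun_eq_iff)
  qed
  have Tr: "(shiftT b ^^ 1) ((shiftT b ^^ (r - 1)) y) = (shiftT b ^^ r) y" for y :: "nat \<times> nat \<Rightarrow> 'a"
    using r by (metis Suc_pred' funpow.simps(2) funpow_0 comp_apply One_nat_def)
  have imgB: "phiB ` Hom (bipicket m r) (a, b, f) = {u + v |u v. u \<in> E1 ` (vecs b :: (nat \<times> nat \<Rightarrow> 'a) set) \<and> v \<in> E2 ` W}"
  proof (intro set_eqI iffI)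
    fix z assume "z \<in> phiB ` Hom (bipicket m r) (a, b, f)"
    then obtain P where zP: "z = phiB P" and P: "P \<in> Hom (bipicket m r) (a, b, f)" by blast
    from P obtain x y1 y2 where Pe: "P = (gen_map [2] a (\<lambda>_. x), gen_map [m, r] b (\<lambda>i. if i = 0 then y1 else y2))"
      and x: "x \<in> vecs a" and y: "y1 \<in> vecs b" "y2 \<in> vecs b" "(shiftT b ^^ r) y2 = (\<lambda>_. 0)"
      and e: "mat_apply a f x = (shiftT b ^^ (m - 2)) y1 + (shiftT b ^^ (r - 1)) y2"
      unfolding HB by blast
    have z: "z = phiB (gen_map [2] a (\<lambda>_. x), gen_map [m, r] b (\<lambda>i. if i = 0 then y1 else y2))"
      using zP Pe by simp
    have e': "mat_apply a f x = (shiftT b ^^ (r - 1)) y2"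
      using e kill[OF y(1) big, of "m - 2"] by (simp add: zfun)
    have "mat_apply a f ((shiftT a ^^ 1) x) = (shiftT b ^^ 1) (mat_apply a f x)"
      by (rule homT_comm[OF f x])
    also have "\<dots> = (\<lambda>_. 0)" using e' Tr y(3) by simp
    also have "\<dots> = mat_apply a f (\<lambda>_. 0)" by (simp add: mat_apply_zero)
    finally have ee: "mat_apply a f ((shiftT a ^^ 1) x) = mat_apply a f (\<lambda>_. 0)" .
    have z0: "(\<lambda>_. 0) \<in> vecs a" by (simp add: vecs_def)
    have "(shiftT a ^^ 1) x = (\<lambda>_. 0)"
      by (rule inj_onD[OF inj ee funpow_shift_vecs[OF x] z0])
    then have "y2 \<in> W" unfolding W_def using y(2,3) e' x by blast
    moreover have "z = E1 y1 + E2 y2" using z cB by simp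
    ultimately show "z \<in> {u + v |u v. u \<in> E1 ` (vecs b :: (nat \<times> nat \<Rightarrow> 'a) set) \<and> v \<in> E2 ` W}"
      using y(1) by (intro CollectI exI[of _ "E1 y1"] exI[of _ "E2 y2"]) auto
  next
    fix z assume "z \<in> {u + v |u v. u \<in> E1 ` (vecs b :: (nat \<times> nat \<Rightarrow> 'a) set) \<and> v \<in> E2 ` W}"
    then obtain y1 y2 where z: "z = E1 y1 + E2 y2" and y1: "y1 \<in> vecs b" and y2: "y2 \<in> W" by blast
    from y2 obtain x where y2': "y2 \<in> vecs b" "(shiftT b ^^ r) y2 = (\<lambda>_. 0)" and x: "x \<in> vecs a"
      "(shiftT a ^^ 1) x = (\<lambda>_. 0)" "mat_apply a f x = (shiftT b ^^ (r - 1)) y2" unfolding W_def by blast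
    have x2: "(shiftT a ^^ 2) x = (\<lambda>_. 0)"
    proof -
      have "(shiftT a ^^ 2) x = shiftT a ((shiftT a ^^ 1) x)" by (simp add: numeral_2_eq_2)
      then show ?thesis using x(2) shiftT_zero by simp
    qed
    have "mat_apply a f x = (shiftT b ^^ (m - 2)) y1 + (shiftT b ^^ (r - 1)) y2"
      using x(3) kill[OF y1 big, of "m - 2"] by (simp add: zfun)
    moreover have "(shiftT b ^^ m) y1 = (\<lambda>_. 0)" using kill[OF y1 big, of m] by simp
    ultimately have "(gen_map [2] a (\<lambda>_. x), gen_map [m, r] b (\<lambda>i. if i = 0 then y1 else y2)) \<in> Hom (bipicket m r) (a, b, f)"
      unfolding HB using x x2 y1 y2' by (intro CollectI exI[of _ x] exI[of _ y1] exI[of _ y2]) simp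
    moreover have "z = phiB (gen_map [2] a (\<lambda>_. x), gen_map [m, r] b (\<lambda>i. if i = 0 then y1 else y2))"
      using cB z by simp
    ultimately show "z \<in> phiB ` Hom (bipicket m r) (a, b, f)" by (rule image_eqI[rotated])
  qed
  have "inj_on phiB (MV.span (Hom (bipicket m r) (a, b, f)))"
    unfolding span_Hom
  proof (rule inj_onI)
    fix P Q assume "P \<in> Hom (bipicket m r) (a, b, f)" "Q \<in> Hom (bipicket m r) (a, b, f)" "phiB P = phiB Q"
    then obtain x y1 y2 x' y1' y2' where
      P: "P = (gen_map [2] a (\<lambda>_. x), gen_map [m, r] b (\<lambda>i. if i = 0 then y1 else y2))"
      and Q: "Q = (gen_map [2] a (\<lambda>_. x'), gen_map [m, r] b (\<lambda>i. if i = 0 then y1' else y2'))"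
      and e: "mat_apply a f x = (shiftT b ^^ (m - 2)) y1 + (shiftT b ^^ (r - 1)) y2"
        "mat_apply a f x' = (shiftT b ^^ (m - 2)) y1' + (shiftT b ^^ (r - 1)) y2'"
      and xx: "x \<in> vecs a" "x' \<in> vecs a" unfolding HB by blast
    have "E1 y1 + E2 y2 = E1 y1' + E2 y2'" using \<open>phiB P = phiB Q\<close> unfolding P Q cB .
    then have "em y1 = em y1'" "em y2 = em y2'" by (simp_all add: E1_def E2_def)
    then have yy: "y1 = y1'" "y2 = y2'" by (simp_all add: em_inj)
    then have "x = x'" using e xx inj by (metis inj_onD)
    then show "P = Q" unfolding P Q yy by (rule arg_cong)
  qed
  then have dB: "MV.dim (phiB ` Hom (bipicket m r) (a, b, f)) = MV.dim (Hom (bipicket m r) (a, b, f))"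
    by (rule MMV.dim_image_eq_gen[OF lin_phiB])
  have S1: "MV.subspace (E1 ` (vecs b :: (nat \<times> nat \<Rightarrow> 'a) set))" by (rule VMV.linear_subspace_image[OF lin_E1 vecs_subspace])
  have S2: "MV.subspace (E2 ` W)" by (rule VMV.linear_subspace_image[OF lin_E2 Wsub])
  have S12: "E1 ` (vecs b :: (nat \<times> nat \<Rightarrow> 'a) set) \<inter> E2 ` W \<subseteq> {0}"
  proof
    fix z assume "z \<in> E1 ` (vecs b :: (nat \<times> nat \<Rightarrow> 'a) set) \<inter> E2 ` W"
    then obtain y y' where "z = E1 y" "z = E2 y'" by blast
    then show "z \<in> {0}" by (auto simp: E1_def E2_def zero_prod_def)
  qed
  have f1: "\<exists>G. finite G \<and> E1 ` (vecs b :: (nat \<times> nat \<Rightarrow> 'a) set) \<subseteq> MV.span G" by (rule fdim_img[OF lin_E1 subset_refl])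
  have f2: "\<exists>G. finite G \<and> E2 ` W \<subseteq> MV.span G" by (rule fdim_img[OF lin_E2 Wvecs])
  have "MV.dim {u + v |u v. u \<in> E1 ` (vecs b :: (nat \<times> nat \<Rightarrow> 'a) set) \<and> v \<in> E2 ` W} = MV.dim (E1 ` (vecs b :: (nat \<times> nat \<Rightarrow> 'a) set)) + MV.dim (E2 ` W)"
    by (rule MV.dim_direct_sum[OF S1 S2 S12 f1 f2])
  moreover have "MV.dim (E1 ` (vecs b :: (nat \<times> nat \<Rightarrow> 'a) set)) = VV.dim (vecs b :: (nat \<times> nat \<Rightarrow> 'a) set)"
    by (rule VMV.dim_image_eq_gen[OF lin_E1 inj_on_subset[OF inj_E1 subset_UNIV]])
  moreover have "MV.dim (E2 ` W) = VV.dim W"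
    by (rule VMV.dim_image_eq_gen[OF lin_E2 inj_on_subset[OF inj_E2 subset_UNIV]])
  ultimately show ?thesis using dB imgB dP img by simp
qed

lemma Hom_P0: "Hom (picket 0 m) (a, b, f) = {(p1, p2). homT [] a p1 \<and> homT (plist m) b p2}"
  by (auto simp: Hom_def picket_def plist_def mat_apply_def idx_def)

lemma obj_facts:
  fixes Y :: "'k::field obj"
  assumes o: "is_obj2 Y" and t: "has_type Y a b c"
  obtains f g where "Y = (a, b, f)" "homT a b f" "inj_on (mat_apply a f) (vecs a)"
    "\<forall>x :: nat \<times> nat \<Rightarrow> 'k. x \<in> vecs a \<longrightarrow> (shiftT a ^^ 2) x = (\<lambda>_. 0)"
    "homT b c g" "mat_apply b g ` vecs b = vecs c"
    "{v \<in> vecs b. mat_apply b g v = (\<lambda>_. 0)} = mat_apply a f ` vecs a"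
proof -
  obtain f where Y: "Y = (a, b, f)" using t unfolding has_type_def by (metis prod.collapse)
  from o have f: "homT a b f" "inj_on (mat_apply a f) (vecs a)" and a2: "\<forall>x\<in>set a. x \<le> 2"
    unfolding is_obj2_def is_obj_def Y by auto
  from t obtain g where g: "homT b c g" "mat_apply b g ` vecs b = vecs c"
    "{v \<in> vecs b. mat_apply b g v = (\<lambda>_. 0)} = mat_apply a f ` vecs a"
    unfolding has_type_def Y by auto
  have "\<forall>x :: nat \<times> nat \<Rightarrow> 'k. x \<in> vecs a \<longrightarrow> (shiftT a ^^ 2) x = (\<lambda>_. 0)"
  proof (intro allI impI ext, clarify)
    fix x :: "nat \<times> nat \<Rightarrow> 'k" and i j assume x: "x \<in> vecs a"
    show "(shiftT a ^^ 2) x (i, j) = 0"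
    proof (cases "(i, j) \<in> idx a")
      case True
      then have "j < a ! i" "i < length a" by (auto simp: idx_def)
      then have "j < 2" using a2 nth_mem by fastforce
      then show ?thesis using funpow_shift[OF x, of 2] by simp
    next
      case False
      then show ?thesis using funpow_shift_vecs[OF x, of 2] by (auto simp: vecs_def)
    qed
  qed
  then show ?thesis using that Y f g by blast
qed

lemma dims:
  fixes Y :: "'k::field obj"
  assumes o: "is_obj2 Y" and t: "has_type Y a b c"
  shows "homdim (picket 1 1) Y = VV.dim {x :: nat \<times> nat \<Rightarrow> 'k. x \<in> vecs a \<and> (shiftT a ^^ 1) x = (\<lambda>_. 0)}"
    and "homdim (picket 0 m) Y = MV.dim {(p1 :: 'k mat, p2). homT [] a p1 \<and> homT (plist m) b p2}"
    and "2 \<le> m \<Longrightarrow> homdim (picket 2 m) Y + VV.dim ((shiftT c ^^ (m - 2)) ` (vecs c :: (nat \<times> nat \<Rightarrow> 'k) set))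
       = VV.dim (vecs b :: (nat \<times> nat \<Rightarrow> 'k) set)"
    and "2 \<le> m \<Longrightarrow> \<forall>i<length b. b ! i + 2 \<le> m \<Longrightarrow> 0 < r \<Longrightarrow>
       homdim (bipicket m r) Y = VV.dim (vecs b :: (nat \<times> nat \<Rightarrow> 'k) set) + homdim (picket 1 r) Y"
proof -
  obtain f g where Y: "Y = (a, b, f)" and f: "homT a b f" "inj_on (mat_apply a f) (vecs a)"
    and a2: "\<forall>x :: nat \<times> nat \<Rightarrow> 'k. x \<in> vecs a \<longrightarrow> (shiftT a ^^ 2) x = (\<lambda>_. 0)"
    and g: "homT b c g" "mat_apply b g ` vecs b = vecs c"
    "{v \<in> vecs b. mat_apply b g v = (\<lambda>_. 0)} = mat_apply a f ` vecs a"
    using obj_facts[OF o t] by blast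
  show "homdim (picket 1 1) Y = VV.dim {x :: nat \<times> nat \<Rightarrow> 'k. x \<in> vecs a \<and> (shiftT a ^^ 1) x = (\<lambda>_. 0)}"
    unfolding homdim_def Y by (rule dim_P11[OF f])
  show "homdim (picket 0 m) Y = MV.dim {(p1 :: 'k mat, p2). homT [] a p1 \<and> homT (plist m) b p2}"
    unfolding homdim_def Y Hom_P0 ..
  show "2 \<le> m \<Longrightarrow> homdim (picket 2 m) Y + VV.dim ((shiftT c ^^ (m - 2)) ` (vecs c :: (nat \<times> nat \<Rightarrow> 'k) set))
       = VV.dim (vecs b :: (nat \<times> nat \<Rightarrow> 'k) set)"
    unfolding homdim_def Y by (rule dim_P2m[OF f a2 g])
  show "2 \<le> m \<Longrightarrow> \<forall>i<length b. b ! i + 2 \<le> m \<Longrightarrow> 0 < r \<Longrightarrow>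
       homdim (bipicket m r) Y = VV.dim (vecs b :: (nat \<times> nat \<Rightarrow> 'k) set) + homdim (picket 1 r) Y"
    unfolding homdim_def Y by (rule dim_B[OF f])
qed

theorem lemma4p2:
  fixes Y Z :: "'k::field obj" and a b c :: "nat list"
  assumes "is_obj2 Y" and "is_obj2 Z"
    and "has_type Y a b c" and "has_type Z a b c"
  shows "deltaH Y Z (picket 1 1) = 0
         \<and> (\<forall>m. deltaH Y Z (picket 0 m) = 0)
         \<and> (\<forall>m. 2 \<le> m \<longrightarrow> deltaH Y Z (picket 2 m) = 0)
         \<and> (\<forall>r \<ge> 1. (\<lambda>m. real_of_int (deltaH Y Z (bipicket m r)))
                        \<longlonglongrightarrow> real_of_int (deltaH Y Z (picket 1 r)))"
proof (intro conjI allI impI)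
  note DY = dims[OF assms(1,3)] and DZ = dims[OF assms(2,4)]
  show "deltaH Y Z (picket 1 1) = 0" unfolding deltaH_def using DY(1) DZ(1) by simp
  show "deltaH Y Z (picket 0 m) = 0" for m unfolding deltaH_def using DY(2) DZ(2) by simp
  show "deltaH Y Z (picket 2 m) = 0" if "2 \<le> m" for m
    unfolding deltaH_def using DY(3)[OF that] DZ(3)[OF that] by simp
  show "(\<lambda>m. real_of_int (deltaH Y Z (bipicket m r))) \<longlonglongrightarrow> real_of_int (deltaH Y Z (picket 1 r))"
    if r: "1 \<le> r" for r
  proof (rule tendsto_eventually)
    show "\<forall>\<^sub>F m in sequentially. real_of_int (deltaH Y Z (bipicket m r)) = real_of_int (deltaH Y Z (picket 1 r))"
      unfolding eventually_sequentially
    proof (intro exI allI impI)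
      fix m assume m: "sum_list b + 2 \<le> m"
      have big: "\<forall>i<length b. b ! i + 2 \<le> m" using m elem_le_sum_list by fastforce
      have m2: "2 \<le> m" using m by simp
      have r0: "0 < r" using r by simp
      show "real_of_int (deltaH Y Z (bipicket m r)) = real_of_int (deltaH Y Z (picket 1 r))"
        unfolding deltaH_def using DY(4)[OF m2 big r0] DZ(4)[OF m2 big r0] by simp
    qed
  qed
qed

end
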